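(* Assume $E\setminus T\ne\emptyset$, and let $\epsilon>0$, $0<p<1$, $K=\lceil\tau\ln\frac{n}{\epsilon p}\rceil$. Let $e_1,\dots,e_K$ be drawn independently from $(p_e)_{e\in E\setminus T}$, and let $F_K=\Pi_{e_K}\cdots\Pi_{e_1}R^{-1}B_TL_T^\dagger$ and $V_K=L_T^\dagger B_T^TF_K$. Then with probability at least $1-p$, \[ (F_K-R^{-1}BL^\dagger)^TR(F_K-R^{-1}BL^\dagger)\preceq\epsilon L_T^\dagger\preceq\epsilon\,\mathrm{st}(T)\,L^\dagger \] and \[ (V_K-L^\dagger)^TL(V_K-L^\dagger)\preceq\epsilon\,\mathrm{st}(T)^2L^\dagger . \]
   Context: Let $G=(V,E,w)$ be a connected undirected graph with $n=|V|$, resistances $r_e=1/w_e>0$ and fixed edge orientations $(a,b)$. The incidence matrix $B\in\mathbb{R}^{E\times V}$ has $B_{(a,b),c}=1$ if $c=a$, $-1$ if $c=b$, $0$ otherwise; $R=\mathrm{diag}(r_e)_{e\in E}$; $L=B^TR^{-1}B$ with pseudoinverse $L^\dagger$; $\preceq$ is the Loewner order. Let $T\subseteq E$ be a spanning tree; $B_T\in\mathbb{R}^{E\times V}$ equals $B$ on rows indexed by $T$ and is zero on rows indexed by $E\setminus T$; $L_T=B_T^TR^{-1}B_T$ with pseudoinverse $L_T^\dagger$. For vertices $a,b$, $\pi_{(a,b)}\in\mathbb{R}^E$ is the unit flow from $a$ to $b$ along the unique tree path, and $P_{(a,b)}$ its edge set. For $e=(a,b)\in E\setminus T$, $c_e=\mathbf{1}_e-\pi_{(a,b)}$,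 $R_e=c_e^TRc_e$, $\Pi_e=I-\frac{c_ec_e^TR}{c_e^TRc_e}$; $\tau=\sum_{e\in E\setminus T}R_e/r_e$; $p_e=\frac{R_e}{r_e\tau}$. The stretch of $e=(a,b)\in E$ is $\mathrm{st}(e)=\frac1{r_e}\sum_{e'\in P_{(a,b)}}r_{e'}$ and $\mathrm{st}(T)=\sum_{e\in E}\mathrm{st}(e)$. *)

theory Defs
  imports "HOL-Analysis.Analysis"
begin

text \<open>Resistances r e > 0. Matrices are HOL-Analysis matrices indexed by types;
  a matrix in R^{X x Y} is a value of type real^'y^'x (rows indexed by 'x).\<close>

definition ugraph_rel :: "('e::finite \<Rightarrow> 'v::finite) \<Rightarrow> ('e \<Rightarrow> 'v) \<Rightarrow> 'e set \<Rightarrow> ('v \<times> 'v) set" where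
  "ugraph_rel src tgt S = {(src e, tgt e) | e. e \<in> S} \<union> {(tgt e, src e) | e. e \<in> S}"

definition connected_by :: "('e::finite \<Rightarrow> 'v::finite) \<Rightarrow> ('e \<Rightarrow> 'v) \<Rightarrow> 'e set \<Rightarrow> bool" where
  "connected_by src tgt S \<longleftrightarrow> (\<forall>u v. (u, v) \<in> (ugraph_rel src tgt S)\<^sup>*)"

definition spanning_tree :: "('e::finite \<Rightarrow> 'v::finite) \<Rightarrow> ('e \<Rightarrow> 'v) \<Rightarrow> 'e set \<Rightarrow> bool" where
  "spanning_tree src tgt T \<longleftrightarrow> connected_by src tgt T \<and>
      (\<forall>e\<in>T. \<not> connected_by src tgt (T - {e}))"

definition incidence :: "('e::finite \<Rightarrow> 'v::finite) \<Rightarrow> ('e \<Rightarrow> 'v) \<Rightarrow> real^'v^'e" where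
  "incidence src tgt = (\<chi> e c. if c = src e then 1 else if c = tgt e then -1 else 0)"

definition incidence_on :: "('e::finite \<Rightarrow> 'v::finite) \<Rightarrow> ('e \<Rightarrow> 'v) \<Rightarrow> 'e set \<Rightarrow> real^'v^'e" where
  "incidence_on src tgt T = (\<chi> e c. if e \<in> T then incidence src tgt $ e $ c else 0)"

definition diag_mat :: "('n \<Rightarrow> real) \<Rightarrow> real^'n^'n" where
  "diag_mat d = (\<chi> i j. if i = j then d i else 0)"

definition outer :: "real^'m \<Rightarrow> real^'n \<Rightarrow> real^'n^'m" where
  "outer u v = (\<chi> i j. u $ i * v $ j)"

definition pinv :: "real^'n^'m \<Rightarrow> real^'m^'n" where
  "pinv A = (THE X. A ** X ** A = A \<and> X ** A ** X = X \<and>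
      transpose (A ** X) = A ** X \<and> transpose (X ** A) = X ** A)"

definition psd :: "real^'n^'n \<Rightarrow> bool" where
  "psd M \<longleftrightarrow> transpose M = M \<and> (\<forall>x. 0 \<le> x \<bullet> (M *v x))"

definition loewner_le :: "real^'n^'n \<Rightarrow> real^'n^'n \<Rightarrow> bool" (infix "\<preceq>\<^sub>L" 50) where
  "A \<preceq>\<^sub>L B \<longleftrightarrow> psd (B - A)"

definition laplacian :: "('e::finite \<Rightarrow> 'v::finite) \<Rightarrow> ('e \<Rightarrow> 'v) \<Rightarrow> ('e \<Rightarrow> real) \<Rightarrow> 'e set \<Rightarrow> real^'v^'v" where
  "laplacian src tgt r S = transpose (incidence_on src tgt S) ** diag_mat (\<lambda>e. 1 / r e)
      ** incidence_on src tgt S"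

definition indic_vec :: "'n \<Rightarrow> real^'n" where
  "indic_vec a = (\<chi> i. if i = a then 1 else 0)"

definition tree_flow :: "('e::finite \<Rightarrow> 'v::finite) \<Rightarrow> ('e \<Rightarrow> 'v) \<Rightarrow> 'e set \<Rightarrow> 'v \<Rightarrow> 'v \<Rightarrow> real^'e" where
  "tree_flow src tgt T a b = (THE f. (\<forall>e. e \<notin> T \<longrightarrow> f $ e = 0) \<and>
      transpose (incidence src tgt) *v f = indic_vec a - indic_vec b)"

definition tree_path :: "('e::finite \<Rightarrow> 'v::finite) \<Rightarrow> ('e \<Rightarrow> 'v) \<Rightarrow> 'e set \<Rightarrow> 'v \<Rightarrow> 'v \<Rightarrow> 'e set" where
  "tree_path src tgt T a b = {e \<in> T. tree_flow src tgt T a b $ e \<noteq> 0}"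

definition stretch :: "('e::finite \<Rightarrow> 'v::finite) \<Rightarrow> ('e \<Rightarrow> 'v) \<Rightarrow> ('e \<Rightarrow> real) \<Rightarrow> 'e set \<Rightarrow> 'e \<Rightarrow> real" where
  "stretch src tgt r T e = (1 / r e) * (\<Sum>e'\<in>tree_path src tgt T (src e) (tgt e). r e')"

definition stretch_tree :: "('e::finite \<Rightarrow> 'v::finite) \<Rightarrow> ('e \<Rightarrow> 'v) \<Rightarrow> ('e \<Rightarrow> real) \<Rightarrow> 'e set \<Rightarrow> real" where
  "stretch_tree src tgt r T = (\<Sum>e\<in>UNIV. stretch src tgt r T e)"

definition cycle_vec :: "('e::finite \<Rightarrow> 'v::finite) \<Rightarrow> ('e \<Rightarrow> 'v) \<Rightarrow> 'e set \<Rightarrow> 'e \<Rightarrow> real^'e" where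
  "cycle_vec src tgt T e = indic_vec e - tree_flow src tgt T (src e) (tgt e)"

definition cycle_res :: "('e::finite \<Rightarrow> 'v::finite) \<Rightarrow> ('e \<Rightarrow> 'v) \<Rightarrow> ('e \<Rightarrow> real) \<Rightarrow> 'e set \<Rightarrow> 'e \<Rightarrow> real" where
  "cycle_res src tgt r T e = (let c = cycle_vec src tgt T e in c \<bullet> (diag_mat r *v c))"

definition proj_e :: "('e::finite \<Rightarrow> 'v::finite) \<Rightarrow> ('e \<Rightarrow> 'v) \<Rightarrow> ('e \<Rightarrow> real) \<Rightarrow> 'e set \<Rightarrow> 'e \<Rightarrow> real^'e^'e" where
  "proj_e src tgt r T e = (let c = cycle_vec src tgt T e in
      mat 1 - (1 / cycle_res src tgt r T e) *\<^sub>R (outer c c ** diag_mat r))"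

definition tau :: "('e::finite \<Rightarrow> 'v::finite) \<Rightarrow> ('e \<Rightarrow> 'v) \<Rightarrow> ('e \<Rightarrow> real) \<Rightarrow> 'e set \<Rightarrow> real" where
  "tau src tgt r T = (\<Sum>e\<in>UNIV - T. cycle_res src tgt r T e / r e)"

definition edge_prob :: "('e::finite \<Rightarrow> 'v::finite) \<Rightarrow> ('e \<Rightarrow> 'v) \<Rightarrow> ('e \<Rightarrow> real) \<Rightarrow> 'e set \<Rightarrow> 'e \<Rightarrow> real" where
  "edge_prob src tgt r T e = cycle_res src tgt r T e / (r e * tau src tgt r T)"

text \<open>Pi_{e_K} ... Pi_{e_1} for the list [e_1, ..., e_K].\<close>
definition proj_prod :: "('e::finite \<Rightarrow> 'v::finite) \<Rightarrow> ('e \<Rightarrow> 'v) \<Rightarrow> ('e \<Rightarrow> real) \<Rightarrow> 'e set \<Rightarrow> 'e list \<Rightarrow> real^'e^'e" where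
  "proj_prod src tgt r T es = fold (\<lambda>e M. proj_e src tgt r T e ** M) es (mat 1)"

text \<open>Probability that K i.i.d. draws e_1..e_K from the distribution q on the set D satisfy P:
  the total weight of all length-K sequences over D satisfying P.\<close>
definition iid_prob :: "('e \<Rightarrow> real) \<Rightarrow> 'e set \<Rightarrow> nat \<Rightarrow> ('e list \<Rightarrow> bool) \<Rightarrow> real" where
  "iid_prob q D K P = (\<Sum>es\<in>{es. set es \<subseteq> D \<and> length es = K}.
      if P es then prod_list (map q es) else 0)"

end

theory Submission
  imports Defs
begin


lemma inner_mv: "(A *v x) \<bullet> y = x \<bullet> (transpose A *v (y::real^'m))"
  for A :: "real^'n^'m"
  by (metis dot_lmul_matrix inner_commute transpose_matrix_vector)

lemma diag_mv: "diag_mat d *v x = (\<chi> i. d i * x $ i)"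
  by (simp add: diag_mat_def matrix_vector_mult_def vec_eq_iff if_distrib if_distribR cong: if_cong)

lemma transpose_diag[simp]: "transpose (diag_mat d) = diag_mat d"
  by (simp add: diag_mat_def transpose_def vec_eq_iff)

lemma inner_sum: "x \<bullet> y = (\<Sum>i\<in>UNIV. x $ i * y $ i)"
  by (simp add: inner_vec_def)

lemma indic_comp: "indic_vec a $ i = (if i = a then 1 else 0)"
  by (simp add: indic_vec_def)

lemma inner_indic: "x \<bullet> indic_vec a = x $ a"
  by (simp add: inner_sum indic_comp if_distrib if_distribR cong: if_cong)

lemma inner_indic': "indic_vec a \<bullet> x = x $ a"
  by (metis inner_commute inner_indic)

lemma outer_mv: "outer u v *v x = (v \<bullet> x) *\<^sub>R u"
  by (simp add: outer_def matrix_vector_mult_def vec_eq_iff inner_sum sum_distrib_left mult_ac)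

lemma mat_transpose_mult: "transpose (A ** B) = transpose B ** transpose A" for A :: "real^'n^'m"
  by (rule matrix_transpose_mul)

lemma transpose_diff: "transpose (A - B) = transpose A - transpose (B::real^'n^'m)"
  by (simp add: transpose_def vec_eq_iff)

lemma transpose_add: "transpose (A + B) = transpose A + transpose (B::real^'n^'m)"
  by (simp add: transpose_def vec_eq_iff)

lemma matrix_diff_ldistrib: "(A::real^'n^'m) ** (B - C) = A ** B - A ** C"
  by (simp add: matrix_eq matrix_vector_mul_assoc[symmetric] algebra_simps)

lemma matrix_diff_rdistrib: "((A::real^'n^'m) - B) ** C = A ** C - B ** C"
  by (simp add: matrix_eq matrix_vector_mul_assoc[symmetric] algebra_simps)

lemma matrix_add_rdistrib': "((A::real^'n^'m) + B) ** C = A ** C + B ** C"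
  by (simp add: matrix_eq matrix_vector_mul_assoc[symmetric] algebra_simps)

lemma matrix_add_ldistrib': "(A::real^'n^'m) ** (B + C) = A ** B + A ** C"
  by (simp add: matrix_eq matrix_vector_mul_assoc[symmetric] algebra_simps)

lemma sum_cs:
  fixes a b :: "'i \<Rightarrow> real"
  shows "(\<Sum>i\<in>A. a i * b i)\<^sup>2 \<le> (\<Sum>i\<in>A. (a i)\<^sup>2) * (\<Sum>i\<in>A. (b i)\<^sup>2)"
proof (cases "finite A")
  case True
  define X where "X = (\<Sum>i\<in>A. (a i)\<^sup>2)"
  define Y where "Y = (\<Sum>i\<in>A. (b i)\<^sup>2)"
  define Z where "Z = (\<Sum>i\<in>A. a i * b i)"
  have X0: "X \<ge> 0" unfolding X_def by (simp add: sum_nonneg)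
  have Y0: "Y \<ge> 0" unfolding Y_def by (simp add: sum_nonneg)
  have key: "\<And>t. 0 \<le> X * t\<^sup>2 - 2 * Z * t + Y"
  proof -
    fix t
    have "0 \<le> (\<Sum>i\<in>A. (t * a i - b i)\<^sup>2)" by (simp add: sum_nonneg)
    also have "\<dots> = (\<Sum>i\<in>A. t\<^sup>2 * (a i)\<^sup>2 - 2 * t * (a i * b i) + (b i)\<^sup>2)"
      by (rule sum.cong) (auto simp: power2_eq_square algebra_simps)
    also have "\<dots> = X * t\<^sup>2 - 2 * Z * t + Y"
      by (simp add: X_def Y_def Z_def sum.distrib sum_subtractf sum_distrib_left sum_distrib_right mult_ac)
    finally show "0 \<le> X * t\<^sup>2 - 2 * Z * t + Y" .
  qed
  show ?thesis
  proof (cases "X = 0")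
    case True
    have "Z = 0"
    proof (rule ccontr)
      assume "Z \<noteq> 0"
      have "0 \<le> X * (Y / (2*Z) + 1)\<^sup>2 - 2 * Z * (Y / (2*Z) + 1) + Y" by (rule key)
      with True \<open>Z \<noteq> 0\<close> have "0 \<le> - 2 * Z" by (simp add: field_simps)
      moreover have "0 \<le> X * (- Y / (2*Z) + 1)\<^sup>2 - 2 * Z * (- Y / (2*Z) - 1) + Y" 
        using key[of "- Y / (2*Z) - 1"] True by simp
      ultimately show False using \<open>Z \<noteq> 0\<close> True key[of "(Y+1)/(2*Z)"]
        by (simp add: field_simps)
    qed
    then show ?thesis using X0 Y0 by (simp add: X_def[symmetric] Y_def[symmetric] Z_def[symmetric])
  next
    case False
    with X0 have Xp: "X > 0" by simp
    have "0 \<le> X * (Z/X)\<^sup>2 - 2 * Z * (Z/X) + Y" by (rule key)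
    hence "0 \<le> Y - Z\<^sup>2 / X" using Xp by (simp add: field_simps power2_eq_square)
    hence "Z\<^sup>2 \<le> X * Y" using Xp by (simp add: field_simps)
    thus ?thesis by (simp add: X_def Y_def Z_def)
  qed
qed simp

lemma sum_cs_w:
  fixes a b w :: "'i \<Rightarrow> real"
  assumes "\<And>i. i \<in> A \<Longrightarrow> w i > 0"
  shows "(\<Sum>i\<in>A. a i * b i)\<^sup>2 \<le> (\<Sum>i\<in>A. w i * (a i)\<^sup>2) * (\<Sum>i\<in>A. (b i)\<^sup>2 / w i)"
proof -
  have "(\<Sum>i\<in>A. a i * b i) = (\<Sum>i\<in>A. (sqrt (w i) * a i) * (b i / sqrt (w i)))"
    by (rule sum.cong) (use assms in \<open>auto simp: less_imp_neq[symmetric]\<close>)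
  also have "\<dots>\<^sup>2 \<le> (\<Sum>i\<in>A. (sqrt (w i) * a i)\<^sup>2) * (\<Sum>i\<in>A. (b i / sqrt (w i))\<^sup>2)"
    by (rule sum_cs)
  also have "(\<Sum>i\<in>A. (sqrt (w i) * a i)\<^sup>2) = (\<Sum>i\<in>A. w i * (a i)\<^sup>2)"
    by (rule sum.cong) (use assms in \<open>auto simp: power_mult_distrib less_imp_le\<close>)
  also have "(\<Sum>i\<in>A. (b i / sqrt (w i))\<^sup>2) = (\<Sum>i\<in>A. (b i)\<^sup>2 / w i)"
    by (rule sum.cong) (use assms in \<open>auto simp: power_divide less_imp_le\<close>)
  finally show ?thesis .
qed



definition ones :: "real^'n" where "ones = (\<chi> i. 1)"
definition Jm :: "real^'n^'n" where "Jm = (1 / real CARD('n)) *\<^sub>R outer ones ones"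

lemma ones_comp[simp]: "ones $ i = 1" by (simp add: ones_def)

lemma inner_ones: "ones \<bullet> x = (\<Sum>i\<in>UNIV. x $ i)"
  by (simp add: inner_sum)

lemma Jm_mv: "Jm *v x = ((\<Sum>i\<in>UNIV. x $ i) / real CARD('n)) *\<^sub>R (ones :: real^'n)"
  by (simp add: Jm_def outer_mv inner_ones scaleR_matrix_vector_assoc[symmetric])

lemma Jm_ones: "Jm *v ones = (ones :: real^'n)"
  by (simp add: Jm_mv)

lemma transpose_Jm[simp]: "transpose (Jm::real^'n^'n) = Jm"
  by (simp add: Jm_def outer_def transpose_def vec_eq_iff)

lemma Jm_Jm: "Jm ** Jm = (Jm :: real^'n^'n)"
  by (simp add: matrix_eq matrix_vector_mul_assoc[symmetric] Jm_mv scaleR_matrix_vector_assoc[symmetric]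
      matrix_vector_mult_scaleR) 

context
  fixes src tgt :: "'e::finite \<Rightarrow> 'v::finite"
  assumes no_loops: "\<forall>e. src e \<noteq> tgt e"
begin

lemma inc_on_mv: "(incidence_on src tgt S *v x) $ e = (if e \<in> S then x $ src e - x $ tgt e else 0)"
proof -
  have "(incidence_on src tgt S *v x) $ e =
      (\<Sum>c\<in>UNIV. (if e \<in> S then (if c = src e then x $ c else 0) - (if c = tgt e then x $ c else 0) else 0))"
    unfolding matrix_vector_mult_def incidence_on_def incidence_def
    using no_loops by (auto intro!: sum.cong)
  also have "\<dots> = (if e \<in> S then x $ src e - x $ tgt e else 0)"
    by (simp add: sum_subtractf)
  finally show ?thesis .
qed

lemma inc_on_UNIV: "incidence_on src tgt UNIV = incidence src tgt"
  by (simp add: incidence_on_def vec_eq_iff)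

lemma inc_mv: "(incidence src tgt *v x) $ e = x $ src e - x $ tgt e"
  using inc_on_mv[of UNIV x e] by (simp add: inc_on_UNIV)

lemma incT_mv: "(transpose (incidence_on src tgt S) *v f) $ v =
   (\<Sum>e\<in>S. f $ e * ((if v = src e then 1 else 0) - (if v = tgt e then 1 else 0)))"
proof -
  have "(transpose (incidence_on src tgt S) *v f) $ v = (\<Sum>e\<in>UNIV. f $ e * (incidence_on src tgt S $ e $ v))"
    by (simp add: vector_matrix_mult_def)
  also have "\<dots> = (\<Sum>e\<in>UNIV. if e \<in> S then f $ e * ((if v = src e then 1 else 0) - (if v = tgt e then 1 else 0)) else 0)"
    unfolding incidence_on_def incidence_def using no_loops by (auto intro!: sum.cong)
  also have "\<dots> = (\<Sum>e\<in>S. f $ e * ((if v = src e then 1 else 0) - (if v = tgt e then 1 else 0)))"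
    by (simp add: sum.If_cases)
  finally show ?thesis .
qed

lemma incT_UNIV_mv: "(transpose (incidence src tgt) *v f) $ v =
   (\<Sum>e\<in>UNIV. f $ e * ((if v = src e then 1 else 0) - (if v = tgt e then 1 else 0)))"
  using incT_mv[of UNIV f v] by (simp add: inc_on_UNIV)

lemma inc_on_ones: "incidence_on src tgt S *v ones = 0"
  by (simp add: vec_eq_iff inc_on_mv)

lemma ones_incT: "ones \<bullet> (transpose (incidence_on src tgt S) *v f) = 0"
  by (metis inc_on_ones inner_mv inner_zero_left)

lemma lap_mv: "laplacian src tgt r S *v y =
   transpose (incidence_on src tgt S) *v (diag_mat (\<lambda>e. 1 / r e) *v (incidence_on src tgt S *v y))"
  by (simp add: laplacian_def matrix_vector_mul_assoc matrix_mul_assoc del: transpose_matrix_vector)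

lemma lap_form: "x \<bullet> (laplacian src tgt r S *v y) =
   (\<Sum>e\<in>S. (x $ src e - x $ tgt e) * (y $ src e - y $ tgt e) / r e)"
proof -
  have "x \<bullet> (laplacian src tgt r S *v y) =
     (incidence_on src tgt S *v x) \<bullet> (diag_mat (\<lambda>e. 1 / r e) *v (incidence_on src tgt S *v y))"
    by (simp add: lap_mv inner_mv del: transpose_matrix_vector)
  also have "\<dots> = (\<Sum>e\<in>UNIV. if e \<in> S then (x $ src e - x $ tgt e) * (y $ src e - y $ tgt e) / r e else 0)"
    by (auto simp: inner_sum diag_mv inc_on_mv intro!: sum.cong)
  also have "\<dots> = (\<Sum>e\<in>S. (x $ src e - x $ tgt e) * (y $ src e - y $ tgt e) / r e)"
    by (simp add: sum.If_cases)
  finally show ?thesis .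
qed

lemma lap_sym: "transpose (laplacian src tgt r S) = laplacian src tgt r S"
  by (simp add: laplacian_def matrix_transpose_mul matrix_mul_assoc)

lemma lap_ones: "laplacian src tgt r S *v ones = 0"
  by (simp add: lap_mv inc_on_ones del: transpose_matrix_vector)

lemma lap_ones': "ones \<bullet> (laplacian src tgt r S *v x) = 0"
  by (metis inner_mv lap_ones lap_sym inner_zero_left inner_commute)

end


lemma pinv_eq:
  fixes A :: "real^'n^'m" and X :: "real^'m^'n"
  assumes 1: "A ** X ** A = A" and 2: "X ** A ** X = X"
    and 3: "transpose (A ** X) = A ** X" and 4: "transpose (X ** A) = X ** A"
  shows "pinv A = X"
  unfolding pinv_def
proof (rule the_equality)
  show "A ** X ** A = A \<and> X ** A ** X = X \<and> transpose (A ** X) = A ** X \<and> transpose (X ** A) = X ** A"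
    using assms by blast
next
  fix Y assume "A ** Y ** A = A \<and> Y ** A ** Y = Y \<and> transpose (A ** Y) = A ** Y \<and> transpose (Y ** A) = Y ** A"
  hence y1: "A ** Y ** A = A" and y2: "Y ** A ** Y = Y" and y3: "transpose (A ** Y) = A ** Y"
    and y4: "transpose (Y ** A) = Y ** A" by auto
  have AX: "A ** X = A ** Y"
  proof -
    have "A ** X = (A ** Y ** A) ** X" using y1 by simp
    also have "\<dots> = (A ** Y) ** (A ** X)" by (simp add: matrix_mul_assoc)
    also have "\<dots> = transpose (A ** Y) ** transpose (A ** X)" using y3 3 by simp
    also have "\<dots> = transpose ((A ** X) ** (A ** Y))" by (simp add: matrix_transpose_mul)
    also have "(A ** X) ** (A ** Y) = (A ** X ** A) ** Y" by (simp add: matrix_mul_assoc)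
    also have "\<dots> = A ** Y" using 1 by simp
    finally show ?thesis using y3 by simp
  qed
  have XA: "X ** A = Y ** A"
  proof -
    have "X ** A = X ** (A ** Y ** A)" using y1 by simp
    also have "\<dots> = (X ** A) ** (Y ** A)" by (simp add: matrix_mul_assoc)
    also have "\<dots> = transpose (X ** A) ** transpose (Y ** A)" using y4 4 by simp
    also have "\<dots> = transpose ((Y ** A) ** (X ** A))" by (simp add: matrix_transpose_mul)
    also have "(Y ** A) ** (X ** A) = Y ** (A ** X ** A)" by (simp add: matrix_mul_assoc)
    also have "\<dots> = Y ** A" using 1 by simp
    finally show ?thesis using y4 by simp
  qed
  have "Y = Y ** A ** Y" using y2 by simp
  also have "\<dots> = X ** A ** Y" using XA by simp
  also have "\<dots> = X ** (A ** X)" using AX by (simp add: matrix_mul_assoc)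
  also have "\<dots> = X" using 2 by (simp add: matrix_mul_assoc)
  finally show "Y = X" by simp
qed

lemma inner_Jm: "x \<bullet> (Jm *v x) = (\<Sum>i\<in>UNIV. x $ i)\<^sup>2 / real CARD('n)" for x :: "real^'n"
  by (simp add: Jm_mv inner_commute[of x] inner_ones power2_eq_square)

lemma Jm_sym_form: "x \<bullet> (Jm *v y) = (Jm *v x) \<bullet> (y::real^'n)"
  by (simp add: inner_mv)

context
  fixes src tgt :: "'e::finite \<Rightarrow> 'v::finite" and r :: "'e \<Rightarrow> real" and S :: "'e set"
  assumes no_loops: "\<forall>e. src e \<noteq> tgt e"
    and r_pos: "\<forall>e. r e > 0"
    and connS: "connected_by src tgt S"
begin

abbreviation "L_S \<equiv> laplacian src tgt r S"
abbreviation "M_S \<equiv> L_S + Jm"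
abbreviation "Mi_S \<equiv> matrix_inv M_S"

lemma lap_psd: "0 \<le> x \<bullet> (L_S *v x)"
  unfolding lap_form[OF no_loops, of x r S x]
  by (intro sum_nonneg divide_nonneg_nonneg) (auto simp: less_imp_le r_pos)

lemma lap_zero_edge:
  assumes "x \<bullet> (L_S *v x) = 0" "e \<in> S" shows "x $ src e = x $ tgt e"
proof -
  have "(\<Sum>e\<in>S. (x $ src e - x $ tgt e) * (x $ src e - x $ tgt e) / r e) = 0"
    using assms lap_form[OF no_loops, of x r S x] by simp
  moreover have "\<forall>e\<in>S. 0 \<le> (x $ src e - x $ tgt e) * (x $ src e - x $ tgt e) / r e"
    using r_pos by (simp add: less_imp_le)
  ultimately have "\<forall>e\<in>S. (x $ src e - x $ tgt e) * (x $ src e - x $ tgt e) / r e = 0"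
    using sum_nonneg_eq_0_iff[of S "\<lambda>e. (x $ src e - x $ tgt e) * (x $ src e - x $ tgt e) / r e"] by auto
  hence "(x $ src e - x $ tgt e) * (x $ src e - x $ tgt e) / r e = 0" using assms(2) by blast
  moreover have "r e \<noteq> 0" using r_pos by (metis less_irrefl)
  ultimately have "(x $ src e - x $ tgt e) * (x $ src e - x $ tgt e) = 0" by simp
  thus ?thesis by simp
qed

lemma lap_zero_const:
  assumes "x \<bullet> (L_S *v x) = 0" shows "x $ u = x $ v"
proof -
  have "(u, v) \<in> (ugraph_rel src tgt S)\<^sup>*" using connS unfolding connected_by_def by blast
  thus ?thesis
  proof (induction rule: rtrancl_induct)
    case (step y z)
    then obtain e where "e \<in> S" "(y = src e \<and> z = tgt e) \<or> (y = tgt e \<and> z = src e)"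
      unfolding ugraph_rel_def by blast
    thus ?case using step lap_zero_edge[OF assms] by auto
  qed simp
qed

lemma MS_psd: "0 \<le> x \<bullet> (M_S *v x)"
  using lap_psd[of x] by (simp add: algebra_simps inner_Jm)

lemma MS_inj: assumes "M_S *v x = 0" shows "x = 0"
proof -
  have "x \<bullet> (M_S *v x) = 0" using assms by simp
  moreover have "x \<bullet> (M_S *v x) = x \<bullet> (L_S *v x) + x \<bullet> (Jm *v x)"
    by (simp add: matrix_vector_mult_add_rdistrib inner_add_right)
  ultimately have 0: "x \<bullet> (L_S *v x) + (\<Sum>i\<in>UNIV. x $ i)\<^sup>2 / real CARD('v) = 0"
    by (simp add: inner_Jm)
  have a: "x \<bullet> (L_S *v x) = 0" and b: "(\<Sum>i\<in>UNIV. x $ i)\<^sup>2 / real CARD('v) = 0"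
    using 0 lap_psd[of x] by (smt (verit) divide_nonneg_nonneg of_nat_0_le_iff zero_le_power2)+
  obtain c where c: "\<And>i. x $ i = c" using lap_zero_const[OF a] by blast
  have "(\<Sum>i\<in>UNIV. x $ i) = real CARD('v) * c" by (simp add: c)
  with b have "c = 0" by simp
  thus ?thesis using c by (simp add: vec_eq_iff)
qed

lemma MS_inv: "M_S ** Mi_S = mat 1" "Mi_S ** M_S = mat 1"
proof -
  have "invertible M_S"
    using MS_inj matrix_left_invertible_ker invertible_left_inverse by blast
  hence "\<exists>A'. M_S ** A' = mat 1 \<and> A' ** M_S = mat 1" unfolding invertible_def by blast
  hence "M_S ** Mi_S = mat 1 \<and> Mi_S ** M_S = mat 1"
    unfolding matrix_inv_def by (rule someI_ex)
  thus "M_S ** Mi_S = mat 1" "Mi_S ** M_S = mat 1" by auto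
qed

lemma MS_sym: "transpose M_S = M_S"
  by (simp add: transpose_add lap_sym[OF no_loops])

lemma MiS_sym: "transpose Mi_S = Mi_S"
proof -
  have "transpose Mi_S ** M_S = mat 1"
    by (metis MS_inv(1) MS_sym matrix_transpose_mul transpose_mat)
  hence "transpose Mi_S = transpose Mi_S ** (M_S ** Mi_S)"
    by (simp add: MS_inv(1))
  also have "\<dots> = Mi_S" by (simp add: matrix_mul_assoc \<open>transpose Mi_S ** M_S = mat 1\<close>)
  finally show ?thesis .
qed

lemma LS_Jm: "L_S ** Jm = 0"
  by (simp add: matrix_eq matrix_vector_mul_assoc[symmetric] Jm_mv matrix_vector_mult_scaleR
      lap_ones[OF no_loops])

lemma Jm_LS: "Jm ** L_S = 0"
  by (metis LS_Jm lap_sym[OF no_loops] matrix_transpose_mul transpose_Jm transpose_iff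
       times0_left transpose_transpose mat_0 transpose_mat)

lemma MS_Jm: "M_S ** Jm = Jm" by (simp add: matrix_add_rdistrib' LS_Jm Jm_Jm)
lemma Jm_MS: "Jm ** M_S = Jm" by (simp add: matrix_add_ldistrib' Jm_LS Jm_Jm)
lemma MiS_Jm: "Mi_S ** Jm = Jm"
  by (metis MS_Jm MS_inv(2) matrix_mul_assoc matrix_mul_lid)
lemma Jm_MiS: "Jm ** Mi_S = Jm"
  by (metis Jm_MS MS_inv(1) matrix_mul_assoc matrix_mul_rid)

lemma LS_eq: "L_S = M_S - Jm" by simp

lemma L_Mi: "L_S ** Mi_S = mat 1 - Jm"
proof -
  have "M_S ** Mi_S = L_S ** Mi_S + Jm ** Mi_S" by (rule matrix_add_rdistrib')
  thus ?thesis by (simp add: MS_inv Jm_MiS)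
qed

lemma Mi_L: "Mi_S ** L_S = mat 1 - Jm"
proof -
  have "Mi_S ** M_S = Mi_S ** L_S + Mi_S ** Jm" by (rule matrix_add_ldistrib')
  thus ?thesis by (simp add: MS_inv MiS_Jm)
qed

lemma L_X: "L_S ** (Mi_S - Jm) = mat 1 - Jm"
  by (simp add: matrix_diff_ldistrib L_Mi LS_Jm)
  
lemma X_L: "(Mi_S - Jm) ** L_S = mat 1 - Jm"
  by (simp add: matrix_diff_rdistrib Mi_L Jm_LS)

lemma pinv_LS: "pinv L_S = Mi_S - Jm"
proof (rule pinv_eq)
  show "L_S ** (Mi_S - Jm) ** L_S = L_S"
  proof -
    have "L_S ** (Mi_S - Jm) ** L_S = (mat 1 - Jm) ** L_S" by (simp only: L_X)
    also have "\<dots> = L_S" by (simp add: matrix_diff_rdistrib Jm_LS)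
    finally show ?thesis .
  qed
  show "(Mi_S - Jm) ** L_S ** (Mi_S - Jm) = Mi_S - Jm"
  proof -
    have "(Mi_S - Jm) ** L_S ** (Mi_S - Jm) = (mat 1 - Jm) ** (Mi_S - Jm)" by (simp only: X_L)
    also have "\<dots> = Mi_S - Jm" by (simp add: matrix_diff_rdistrib matrix_diff_ldistrib Jm_MiS Jm_Jm)
    finally show ?thesis .
  qed
  show "transpose (L_S ** (Mi_S - Jm)) = L_S ** (Mi_S - Jm)"
    by (simp add: L_X transpose_diff)
  show "transpose ((Mi_S - Jm) ** L_S) = (Mi_S - Jm) ** L_S"
    by (simp add: X_L transpose_diff)
qed

end


lemma ugraph_sym: "sym (ugraph_rel src tgt S)"
  unfolding ugraph_rel_def sym_def by blast

locale gr =
  fixes src tgt :: "'e::finite \<Rightarrow> 'v::finite" and r :: "'e \<Rightarrow> real" and T :: "'e set"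
  assumes no_loops: "\<forall>e. src e \<noteq> tgt e"
    and r_pos: "\<forall>e. r e > 0"
    and tree: "spanning_tree src tgt T"
begin

abbreviation "Bm \<equiv> incidence src tgt"
abbreviation "BTm \<equiv> incidence_on src tgt T"
abbreviation "Rm \<equiv> diag_mat r"
abbreviation "Rim \<equiv> diag_mat (\<lambda>e. 1 / r e)"
abbreviation "LUm \<equiv> laplacian src tgt r UNIV"
abbreviation "LTm \<equiv> laplacian src tgt r T"
abbreviation "tf \<equiv> tree_flow src tgt T"

lemma connT: "connected_by src tgt T"
  using tree unfolding spanning_tree_def by blast

lemma minT: "e \<in> T \<Longrightarrow> \<not> connected_by src tgt (T - {e})"
  using tree unfolding spanning_tree_def by blast

lemma connU: "connected_by src tgt UNIV"
proof -
  have "ugraph_rel src tgt T \<subseteq> ugraph_rel src tgt UNIV" unfolding ugraph_rel_def by blast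
  hence "(ugraph_rel src tgt T)\<^sup>* \<subseteq> (ugraph_rel src tgt UNIV)\<^sup>*" by (rule rtrancl_mono)
  thus ?thesis using connT unfolding connected_by_def by blast
qed

lemma rpos: "r e > 0" using r_pos by blast

lemma L_is: "laplacian src tgt r UNIV = laplacian src tgt r UNIV" ..

lemma pinvT: "pinv LTm = matrix_inv (LTm + Jm) - Jm"
  by (rule pinv_LS[OF no_loops r_pos connT])
lemma pinvU: "pinv LUm = matrix_inv (LUm + Jm) - Jm"
  by (rule pinv_LS[OF no_loops r_pos connU])

definition cutset :: "'e \<Rightarrow> 'v set" where
  "cutset e' = {v. (src e', v) \<in> (ugraph_rel src tgt (T - {e'}))\<^sup>*}"

lemma cut_src: "src e' \<in> cutset e'" by (simp add: cutset_def)

lemma cut_tgt: assumes "e' \<in> T" shows "tgt e' \<notin> cutset e'"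
proof
  assume "tgt e' \<in> cutset e'"
  hence st: "(src e', tgt e') \<in> (ugraph_rel src tgt (T - {e'}))\<^sup>*" by (simp add: cutset_def)
  have sy: "sym ((ugraph_rel src tgt (T - {e'}))\<^sup>*)" by (rule sym_rtrancl[OF ugraph_sym])
  have "ugraph_rel src tgt T \<subseteq> (ugraph_rel src tgt (T - {e'}))\<^sup>*"
  proof
    fix p assume "p \<in> ugraph_rel src tgt T"
    then obtain e where e: "e \<in> T" "p = (src e, tgt e) \<or> p = (tgt e, src e)"
      unfolding ugraph_rel_def by blast
    show "p \<in> (ugraph_rel src tgt (T - {e'}))\<^sup>*"
    proof (cases "e = e'")
      case True thus ?thesis using e st symD[OF sy st] by auto
    next
      case False
      hence "p \<in> ugraph_rel src tgt (T - {e'})" using e unfolding ugraph_rel_def by blast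
      thus ?thesis by blast
    qed
  qed
  hence "(ugraph_rel src tgt T)\<^sup>* \<subseteq> (ugraph_rel src tgt (T - {e'}))\<^sup>*"
    by (rule rtrancl_subset_rtrancl)
  hence "connected_by src tgt (T - {e'})" using connT unfolding connected_by_def by blast
  thus False using minT[OF assms] by blast
qed

lemma cut_closed: assumes "e \<in> T" "e \<noteq> e'" shows "src e \<in> cutset e' \<longleftrightarrow> tgt e \<in> cutset e'"
proof -
  have "(src e, tgt e) \<in> ugraph_rel src tgt (T - {e'})" "(tgt e, src e) \<in> ugraph_rel src tgt (T - {e'})"
    using assms unfolding ugraph_rel_def by blast+
  thus ?thesis unfolding cutset_def mem_Collect_eq by (blast intro: rtrancl_into_rtrancl)
qed

lemma cut_sum:
  assumes supp: "\<forall>e. e \<notin> T \<longrightarrow> f $ e = 0" and e': "e' \<in> T"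
  shows "(\<Sum>v\<in>cutset e'. (transpose Bm *v f) $ v) = f $ e'"
proof -
  let ?U = "cutset e'"
  have "(\<Sum>v\<in>?U. (transpose Bm *v f) $ v) =
     (\<Sum>v\<in>?U. \<Sum>e\<in>UNIV. f $ e * ((if v = src e then 1 else 0) - (if v = tgt e then 1 else 0)))"
    by (simp add: incT_UNIV_mv[OF no_loops] del: transpose_matrix_vector)
  also have "\<dots> = (\<Sum>e\<in>UNIV. \<Sum>v\<in>?U. f $ e * ((if v = src e then 1 else 0) - (if v = tgt e then 1 else 0)))"
    by (rule sum.swap)
  also have "\<dots> = (\<Sum>e\<in>UNIV. f $ e * ((if src e \<in> ?U then 1 else 0) - (if tgt e \<in> ?U then 1 else 0)))"
  proof (rule sum.cong[OF refl])
    fix e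
    have "(\<Sum>v\<in>?U. f $ e * ((if v = src e then 1 else 0) - (if v = tgt e then 1 else 0))) =
       (\<Sum>v\<in>?U. (if v = src e then f $ e else 0) - (if v = tgt e then f $ e else 0))"
      by (rule sum.cong) auto
    also have "\<dots> = (\<Sum>v\<in>?U. (if v = src e then f $ e else 0)) - (\<Sum>v\<in>?U. (if v = tgt e then f $ e else 0))"
      by (rule sum_subtractf)
    also have "\<dots> = f $ e * ((if src e \<in> ?U then 1 else 0) - (if tgt e \<in> ?U then 1 else 0))"
      by (simp only: sum.delta finite) simp
    finally show "(\<Sum>v\<in>?U. f $ e * ((if v = src e then 1 else 0) - (if v = tgt e then 1 else 0))) =
       f $ e * ((if src e \<in> ?U then 1 else 0) - (if tgt e \<in> ?U then 1 else 0))" .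
  qed
  also have "\<dots> = (\<Sum>e\<in>UNIV. if e = e' then f $ e' else 0)"
  proof (rule sum.cong)
    fix e assume "e \<in> (UNIV :: 'e set)"
    show "f $ e * ((if src e \<in> ?U then 1 else 0) - (if tgt e \<in> ?U then 1 else 0)) = (if e = e' then f $ e' else 0)"
    proof (cases "e = e'")
      case True thus ?thesis using cut_src cut_tgt[OF e'] by simp
    next
      case False
      show ?thesis
      proof (cases "e \<in> T")
        case True thus ?thesis using cut_closed[OF True False] False by simp
      next
        case False thus ?thesis using supp \<open>e \<noteq> e'\<close> by simp
      qed
    qed
  qed simp
  also have "\<dots> = f $ e'" by simp
  finally show ?thesis .
qed

lemma flow_zero:
  assumes "\<forall>e. e \<notin> T \<longrightarrow> f $ e = 0" "transpose Bm *v f = 0"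
  shows "f = 0"
proof -
  have "f $ e = 0" for e
  proof (cases "e \<in> T")
    case True
    from cut_sum[OF assms(1) True] assms(2) show ?thesis by simp
  qed (use assms in auto)
  thus ?thesis by (simp add: vec_eq_iff)
qed

lemma BT_supp: "e \<notin> T \<Longrightarrow> (BTm *v x) $ e = 0"
  by (simp add: inc_on_mv[OF no_loops])

lemma B_Ri_BT: "transpose Bm *v (Rim *v (BTm *v x)) = LTm *v x"
proof -
  have "(transpose Bm *v (Rim *v (BTm *v x))) $ v = (LTm *v x) $ v" for v
  proof -
    have "(transpose Bm *v (Rim *v (BTm *v x))) $ v =
       (\<Sum>e\<in>UNIV. (Rim *v (BTm *v x)) $ e * ((if v = src e then 1 else 0) - (if v = tgt e then 1 else 0)))"
      by (simp only: incT_UNIV_mv[OF no_loops])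
    also have "\<dots> = (\<Sum>e\<in>T. (Rim *v (BTm *v x)) $ e * ((if v = src e then 1 else 0) - (if v = tgt e then 1 else 0)))"
      by (rule sum.mono_neutral_right) (auto simp: diag_mv BT_supp)
    also have "\<dots> = (LTm *v x) $ v"
      by (simp only: lap_mv[OF no_loops] incT_mv[OF no_loops])
    finally show ?thesis .
  qed
  thus ?thesis by (simp add: vec_eq_iff del: transpose_matrix_vector)
qed

lemma B_Ri_B: "transpose Bm *v (Rim *v (Bm *v x)) = LUm *v x"
  by (simp add: lap_mv[OF no_loops] inc_on_UNIV[OF no_loops] del: transpose_matrix_vector)

lemma sum_indic_diff: "(\<Sum>i\<in>UNIV. (indic_vec a - indic_vec b :: real^'v) $ i) = 0"
  by (simp add: indic_comp sum_subtractf)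

lemma Jm_zero: "(\<Sum>i\<in>UNIV. y $ i) = 0 \<Longrightarrow> Jm *v y = (0::real^'n)"
  by (simp add: Jm_mv)

lemma LT_pinvT: "LTm ** pinv LTm = mat 1 - Jm"
  by (simp add: pinvT L_X[OF no_loops r_pos connT])

lemma pinvT_LT: "pinv LTm ** LTm = mat 1 - Jm"
  by (simp add: pinvT X_L[OF no_loops r_pos connT])

lemma L_pinvU: "LUm ** pinv LUm = mat 1 - Jm"
  by (simp add: pinvU L_X[OF no_loops r_pos connU])

lemma pinvU_L: "pinv LUm ** LUm = mat 1 - Jm"
  by (simp add: pinvU X_L[OF no_loops r_pos connU])

definition pi0 :: "'v \<Rightarrow> 'v \<Rightarrow> real^'e" where
  "pi0 a b = Rim *v (BTm *v (pinv LTm *v (indic_vec a - indic_vec b)))"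

lemma pi0_props: "(\<forall>e. e \<notin> T \<longrightarrow> pi0 a b $ e = 0) \<and>
      transpose Bm *v pi0 a b = indic_vec a - indic_vec b"
proof
  show "\<forall>e. e \<notin> T \<longrightarrow> pi0 a b $ e = 0" by (simp add: pi0_def diag_mv BT_supp)
  have "transpose Bm *v pi0 a b = LTm *v (pinv LTm *v (indic_vec a - indic_vec b))"
    unfolding pi0_def by (rule B_Ri_BT)
  also have "\<dots> = (mat 1 - Jm) *v (indic_vec a - indic_vec b)"
    by (simp add: matrix_vector_mul_assoc LT_pinvT del: transpose_matrix_vector)
  also have "\<dots> = indic_vec a - indic_vec b"
    by (simp add: matrix_vector_mult_diff_rdistrib Jm_zero[OF sum_indic_diff])
  finally show "transpose Bm *v pi0 a b = indic_vec a - indic_vec b" .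
qed

lemma pi_eq: "tf a b = pi0 a b"
  unfolding tree_flow_def
proof (rule the_equality)
  show "(\<forall>e. e \<notin> T \<longrightarrow> pi0 a b $ e = 0) \<and> transpose Bm *v pi0 a b = indic_vec a - indic_vec b"
    by (rule pi0_props)
next
  fix f assume f: "(\<forall>e. e \<notin> T \<longrightarrow> f $ e = 0) \<and> transpose Bm *v f = indic_vec a - indic_vec b"
  have "f - pi0 a b = 0"
  proof (rule flow_zero)
    show "\<forall>e. e \<notin> T \<longrightarrow> (f - pi0 a b) $ e = 0" using f pi0_props by simp
    show "transpose Bm *v (f - pi0 a b) = 0" using f pi0_props[of a b]
      by (simp add: matrix_vector_mult_diff_distrib del: transpose_matrix_vector)
  qed
  thus "f = pi0 a b" by simp
qed

lemma pi_supp: "e \<notin> T \<Longrightarrow> tf a b $ e = 0"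
  using pi0_props pi_eq by metis

lemma pi_div: "transpose Bm *v tf a b = indic_vec a - indic_vec b"
  using pi0_props pi_eq by metis

lemma pi_entry: "(tf a b $ e)\<^sup>2 \<le> 1"
proof (cases "e \<in> T")
  case True
  have "tf a b $ e = (\<Sum>v\<in>cutset e. (indic_vec a - indic_vec b) $ v)"
    using cut_sum[OF _ True, of "tf a b"] pi_supp pi_div by simp
  also have "\<dots> = (if a \<in> cutset e then 1 else 0) - (if b \<in> cutset e then 1 else 0)"
    by (simp add: indic_comp sum_subtractf)
  finally show ?thesis by auto
qed (simp add: pi_supp)

end


context gr begin

lemma div_inner: "(x $ src e - x $ tgt e) = (\<Sum>e'\<in>tree_path src tgt T (src e) (tgt e).
     tf (src e) (tgt e) $ e' * (x $ src e' - x $ tgt e'))"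
proof -
  let ?f = "tf (src e) (tgt e)"
  have "x $ src e - x $ tgt e = (indic_vec (src e) - indic_vec (tgt e)) \<bullet> x"
    by (simp add: inner_diff_left inner_indic')
  also have "\<dots> = (transpose Bm *v ?f) \<bullet> x" by (simp only: pi_div)
  also have "\<dots> = ?f \<bullet> (Bm *v x)"
    by (metis inner_mv inner_commute)
  also have "\<dots> = (\<Sum>e'\<in>UNIV. ?f $ e' * (x $ src e' - x $ tgt e'))"
    by (simp add: inner_sum inc_mv[OF no_loops])
  also have "\<dots> = (\<Sum>e'\<in>tree_path src tgt T (src e) (tgt e). ?f $ e' * (x $ src e' - x $ tgt e'))"
    by (rule sum.mono_neutral_right) (simp, simp, use pi_supp in \<open>force simp: tree_path_def\<close>)
  finally show ?thesis .
qed

lemma edge_bound: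
  "(x $ src e - x $ tgt e) * (x $ src e - x $ tgt e) / r e \<le>
     stretch src tgt r T e * (x \<bullet> (LTm *v x))"
proof -
  let ?P = "tree_path src tgt T (src e) (tgt e)"
  let ?f = "tf (src e) (tgt e)"
  let ?d = "\<lambda>e'. x $ src e' - x $ tgt e'"
  have PT: "?P \<subseteq> T" by (auto simp: tree_path_def)
  have Q: "x \<bullet> (LTm *v x) = (\<Sum>e'\<in>T. (?d e')\<^sup>2 / r e')"
    by (simp add: lap_form[OF no_loops] power2_eq_square)
  have "(?d e)\<^sup>2 = (\<Sum>e'\<in>?P. ?f $ e' * ?d e')\<^sup>2"
    using div_inner[of x e] by (rule arg_cong)
  also have "\<dots> \<le> (\<Sum>e'\<in>?P. r e' * (?f $ e')\<^sup>2) * (\<Sum>e'\<in>?P. (?d e')\<^sup>2 / r e')"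
    by (rule sum_cs_w) (simp add: rpos)
  also have "\<dots> \<le> (\<Sum>e'\<in>?P. r e') * (\<Sum>e'\<in>T. (?d e')\<^sup>2 / r e')"
  proof (rule mult_mono)
    show "(\<Sum>e'\<in>?P. r e' * (?f $ e')\<^sup>2) \<le> (\<Sum>e'\<in>?P. r e')"
    proof (rule sum_mono)
      fix e' show "r e' * (?f $ e')\<^sup>2 \<le> r e'"
        using pi_entry[of "src e" "tgt e" e'] rpos[of e'] by (simp add: mult_left_le less_imp_le)
    qed
    show "(\<Sum>e'\<in>?P. (?d e')\<^sup>2 / r e') \<le> (\<Sum>e'\<in>T. (?d e')\<^sup>2 / r e')"
      by (rule sum_mono2) (simp, use PT in blast, simp add: rpos less_imp_le)
    show "0 \<le> (\<Sum>e'\<in>?P. r e')" by (rule sum_nonneg) (simp add: rpos less_imp_le)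
    show "0 \<le> (\<Sum>e'\<in>?P. (?d e')\<^sup>2 / r e')"
      by (rule sum_nonneg) (simp add: rpos less_imp_le)
  qed
  finally have "(?d e)\<^sup>2 \<le> (\<Sum>e'\<in>?P. r e') * (x \<bullet> (LTm *v x))" using Q by simp
  hence "(?d e)\<^sup>2 / r e \<le> (\<Sum>e'\<in>?P. r e') * (x \<bullet> (LTm *v x)) / r e"
    by (rule divide_right_mono) (simp add: rpos less_imp_le)
  thus ?thesis by (simp add: stretch_def power2_eq_square)
qed

lemma stretch_bound: "x \<bullet> (LUm *v x) \<le> stretch_tree src tgt r T * (x \<bullet> (LTm *v x))"
proof -
  have "x \<bullet> (LUm *v x) = (\<Sum>e\<in>UNIV. (x $ src e - x $ tgt e) * (x $ src e - x $ tgt e) / r e)"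
    by (simp add: lap_form[OF no_loops])
  also have "\<dots> \<le> (\<Sum>e\<in>UNIV. stretch src tgt r T e * (x \<bullet> (LTm *v x)))"
    by (rule sum_mono) (rule edge_bound)
  also have "\<dots> = stretch_tree src tgt r T * (x \<bullet> (LTm *v x))"
    by (simp add: stretch_tree_def sum_distrib_right)
  finally show ?thesis .
qed

lemma stretch_nonneg: "0 \<le> stretch_tree src tgt r T"
  unfolding stretch_tree_def stretch_def
  by (intro sum_nonneg mult_nonneg_nonneg) (auto simp: rpos less_imp_le intro: sum_nonneg)

end


lemma mv_sum: "(A::real^'n^'m) *v (\<Sum>i\<in>S. f i) = (\<Sum>i\<in>S. A *v f i)"
proof (cases "finite S")
  case True thus ?thesis by (induction S rule: finite_induct) (simp_all add: matrix_vector_right_distrib)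
qed simp

context gr begin

definition Nr :: "real^'e \<Rightarrow> real" where "Nr x = x \<bullet> (Rm *v x)"
abbreviation "cv e \<equiv> cycle_vec src tgt T e"
abbreviation "cres e \<equiv> cycle_res src tgt r T e"
abbreviation "Pe e \<equiv> proj_e src tgt r T e"
abbreviation "tau' \<equiv> tau src tgt r T"
abbreviation "pr e \<equiv> edge_prob src tgt r T e"

lemma Rform: "u \<bullet> (Rm *v v) = (\<Sum>i\<in>UNIV. r i * (u $ i * v $ i))"
  by (simp add: inner_sum diag_mv mult_ac)

lemma Rsym: "u \<bullet> (Rm *v v) = v \<bullet> (Rm *v u)"
  by (simp add: Rform mult_ac)

lemma Nr_sum: "Nr x = (\<Sum>i\<in>UNIV. r i * (x $ i)\<^sup>2)"
  by (simp add: Nr_def Rform power2_eq_square)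

lemma Nr_nonneg: "0 \<le> Nr x"
  unfolding Nr_sum by (intro sum_nonneg mult_nonneg_nonneg) (auto simp: rpos less_imp_le)

lemma BT_indic: "transpose Bm *v indic_vec e = indic_vec (src e) - indic_vec (tgt e)"
proof -
  have "(transpose Bm *v indic_vec e) $ v = (indic_vec (src e) - indic_vec (tgt e)) $ v" for v
  proof -
    have "(transpose Bm *v indic_vec e) $ v =
       (\<Sum>e'\<in>UNIV. (if e' = e then ((if v = src e' then 1 else 0) - (if v = tgt e' then 1 else 0)) else 0))"
      by (simp only: incT_UNIV_mv[OF no_loops]) (rule sum.cong, auto simp: indic_comp)
    also have "\<dots> = (indic_vec (src e) - indic_vec (tgt e)) $ v"
      by (simp add: indic_comp)
    finally show ?thesis .
  qed
  thus ?thesis by (simp add: vec_eq_iff del: transpose_matrix_vector)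
qed

lemma cv_circ: "transpose Bm *v cv e = 0"
  by (simp add: cycle_vec_def matrix_vector_mult_diff_distrib BT_indic pi_div del: transpose_matrix_vector)

lemma cv_off: "e'' \<notin> T \<Longrightarrow> cv e $ e'' = (if e'' = e then 1 else 0)"
  by (simp add: cycle_vec_def indic_comp pi_supp)

lemma cres_eq: "cres e = Nr (cv e)"
  by (simp add: cycle_res_def Nr_def Let_def)

lemma cres_ge: assumes "e \<notin> T" shows "r e \<le> cres e"
proof -
  have "r e = r e * (cv e $ e)\<^sup>2" using cv_off[OF assms, of e] by simp
  also have "\<dots> \<le> (\<Sum>i\<in>UNIV. r i * (cv e $ i)\<^sup>2)"
    by (rule member_le_sum) (auto simp: rpos less_imp_le)
  finally show ?thesis by (simp add: cres_eq Nr_sum)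
qed

lemma cres_pos: "e \<notin> T \<Longrightarrow> 0 < cres e"
  using cres_ge rpos by (meson less_le_trans)

lemma Pe_mv: "Pe e *v x = x - ((cv e \<bullet> (Rm *v x)) / cres e) *\<^sub>R cv e"
  by (simp add: proj_e_def Let_def matrix_vector_mult_diff_rdistrib scaleR_matrix_vector_assoc[symmetric]
      matrix_vector_mul_assoc[symmetric] outer_mv)

lemma Nr_Pe: assumes "e \<notin> T"
  shows "Nr (Pe e *v x) = Nr x - (cv e \<bullet> (Rm *v x))\<^sup>2 / cres e"
proof -
  define d where "d = cv e \<bullet> (Rm *v x)"
  define C where "C = cres e"
  have C: "C > 0" using cres_pos[OF assms] by (simp add: C_def)
  have CC: "cv e \<bullet> (Rm *v cv e) = C" by (simp add: C_def cres_eq Nr_def)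
  have xd: "x \<bullet> (Rm *v cv e) = d" by (simp add: d_def Rsym)
  have "Nr (Pe e *v x) = Nr (x - (d / C) *\<^sub>R cv e)" by (simp add: Pe_mv d_def C_def)
  also have "\<dots> = Nr x - 2 * (d / C) * d + (d/C) * (d/C) * C"
    by (simp add: Nr_def matrix_vector_mult_diff_distrib matrix_vector_mult_scaleR inner_diff_left
        inner_diff_right CC xd d_def[symmetric] algebra_simps)
  also have "\<dots> = Nr x - d\<^sup>2 / C" using C by (simp add: field_simps power2_eq_square)
  finally show ?thesis by (simp add: d_def C_def)
qed

lemma Pe_circ: "transpose Bm *v x = 0 \<Longrightarrow> transpose Bm *v (Pe e *v x) = 0"
  by (simp add: Pe_mv matrix_vector_mult_diff_distrib matrix_vector_mult_scaleR cv_circ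
      del: transpose_matrix_vector)

lemma circ_decomp: assumes "transpose Bm *v x = 0"
  shows "x = (\<Sum>e\<in>UNIV - T. x $ e *\<^sub>R cv e)"
proof -
  let ?s = "(\<Sum>e\<in>UNIV - T. x $ e *\<^sub>R cv e)"
  have "x - ?s = 0"
  proof (rule flow_zero)
    show "\<forall>e. e \<notin> T \<longrightarrow> (x - ?s) $ e = 0"
    proof (intro allI impI)
      fix e'' assume e'': "e'' \<notin> T"
      have "?s $ e'' = (\<Sum>e\<in>UNIV - T. x $ e * (if e'' = e then 1 else 0))"
        by (simp add: sum_component cv_off[OF e''])
      also have "\<dots> = x $ e''" using e'' by (simp add: if_distrib cong: if_cong)
      finally show "(x - ?s) $ e'' = 0" by simp
    qed
    show "transpose Bm *v (x - ?s) = 0"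
      by (simp add: matrix_vector_mult_diff_distrib mv_sum matrix_vector_mult_scaleR cv_circ assms
          del: transpose_matrix_vector)
  qed
  thus ?thesis by simp
qed

lemma Nr_le: assumes "transpose Bm *v x = 0"
  shows "Nr x \<le> (\<Sum>e\<in>UNIV - T. (cv e \<bullet> (Rm *v x))\<^sup>2 / r e)"
proof -
  let ?S = "(\<Sum>e\<in>UNIV - T. (cv e \<bullet> (Rm *v x))\<^sup>2 / r e)"
  have S0: "0 \<le> ?S" by (intro sum_nonneg divide_nonneg_pos) (auto simp: rpos)
  have dx: "x = (\<Sum>e\<in>UNIV - T. x $ e *\<^sub>R cv e)" by (rule circ_decomp[OF assms])
  have "Nr x = (\<Sum>e\<in>UNIV - T. x $ e *\<^sub>R cv e) \<bullet> (Rm *v x)"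
    unfolding Nr_def using dx by (rule arg_cong[where f="\<lambda>z. z \<bullet> (Rm *v x)"])
  also have "\<dots> = (\<Sum>e\<in>UNIV - T. x $ e * (cv e \<bullet> (Rm *v x)))"
    by (simp add: inner_sum_left)
  finally have N: "Nr x = (\<Sum>e\<in>UNIV - T. x $ e * (cv e \<bullet> (Rm *v x)))" .
  have "(Nr x)\<^sup>2 \<le> (\<Sum>e\<in>UNIV - T. r e * (x $ e)\<^sup>2) * ?S"
    unfolding N by (rule sum_cs_w) (simp add: rpos)
  also have "\<dots> \<le> Nr x * ?S"
  proof (rule mult_right_mono[OF _ S0])
    show "(\<Sum>e\<in>UNIV - T. r e * (x $ e)\<^sup>2) \<le> Nr x"
      unfolding Nr_sum by (rule sum_mono2) (auto simp: rpos less_imp_le)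
  qed
  finally have "(Nr x)\<^sup>2 \<le> Nr x * ?S" .
  hence ineq: "Nr x * Nr x \<le> Nr x * ?S" by (simp add: power2_eq_square)
  show ?thesis
  proof (cases "Nr x = 0")
    case True thus ?thesis using S0 by simp
  next
    case False
    hence "0 < Nr x" using Nr_nonneg[of x] by linarith
    thus ?thesis using ineq mult_le_cancel_left_pos by blast
  qed
qed

context
  assumes nontriv: "UNIV - T \<noteq> {}"
begin

lemma tau_ge1: "1 \<le> tau'"
proof -
  obtain e0 where e0: "e0 \<in> UNIV - T" using nontriv by blast
  have "1 \<le> cres e0 / r e0" using cres_ge[of e0] e0 rpos[of e0] by simp
  also have "\<dots> \<le> tau'" unfolding tau_def
    by (rule member_le_sum[OF e0]) (auto intro!: divide_nonneg_pos cres_pos[THEN less_imp_le] simp: rpos)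
  finally show ?thesis .
qed

lemma pr_nonneg: "e \<notin> T \<Longrightarrow> 0 \<le> pr e"
  unfolding edge_prob_def using tau_ge1 cres_pos[of e] rpos[of e] by simp

lemma pr_sum: "(\<Sum>e\<in>UNIV - T. pr e) = 1"
proof -
  have "(\<Sum>e\<in>UNIV - T. pr e) = (\<Sum>e\<in>UNIV - T. cres e / r e) / tau'"
    unfolding edge_prob_def by (simp add: sum_divide_distrib field_simps)
  also have "\<dots> = 1" using tau_ge1 by (simp add: tau_def)
  finally show ?thesis .
qed

lemma contract: assumes "transpose Bm *v x = 0"
  shows "(\<Sum>e\<in>UNIV - T. pr e * Nr (Pe e *v x)) \<le> (1 - 1 / tau') * Nr x"
proof -
  let ?d = "\<lambda>e. cv e \<bullet> (Rm *v x)"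
  have "(\<Sum>e\<in>UNIV - T. pr e * Nr (Pe e *v x)) = (\<Sum>e\<in>UNIV - T. pr e * Nr x - (?d e)\<^sup>2 / r e / tau')"
  proof (rule sum.cong[OF refl])
    fix e assume "e \<in> UNIV - T"
    hence e: "e \<notin> T" by simp
    have "pr e * Nr (Pe e *v x) = pr e * Nr x - pr e * (?d e)\<^sup>2 / cres e"
      by (simp add: Nr_Pe[OF e] right_diff_distrib)
    also have "pr e * (?d e)\<^sup>2 / cres e = (?d e)\<^sup>2 / r e / tau'"
      using cres_pos[OF e] rpos[of e] tau_ge1 by (simp add: edge_prob_def field_simps)
    finally show "pr e * Nr (Pe e *v x) = pr e * Nr x - (?d e)\<^sup>2 / r e / tau'" .
  qed
  also have "\<dots> = Nr x - (\<Sum>e\<in>UNIV - T. (?d e)\<^sup>2 / r e) / tau'"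
  proof -
    have a: "(\<Sum>e\<in>UNIV - T. pr e * Nr x) = Nr x"
      by (simp only: sum_distrib_right[symmetric] pr_sum mult_1)
    have b: "(\<Sum>e\<in>UNIV - T. (?d e)\<^sup>2 / r e / tau') = (\<Sum>e\<in>UNIV - T. (?d e)\<^sup>2 / r e) / tau'"
      by (rule sum_divide_distrib[symmetric])
    show ?thesis by (simp only: sum_subtractf a b)
  qed
  also have "\<dots> \<le> Nr x - Nr x / tau'"
    using Nr_le[OF assms] tau_ge1 by (simp add: divide_right_mono)
  also have "\<dots> = (1 - 1 / tau') * Nr x" by (simp add: field_simps)
  finally show ?thesis .
qed

end

lemma pp_nil: "proj_prod src tgt r T [] = mat 1"
  by (simp add: proj_prod_def)

lemma pp_snoc: "proj_prod src tgt r T (es @ [e]) = Pe e ** proj_prod src tgt r T es"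
  by (simp add: proj_prod_def)

lemma pp_circ: "transpose Bm *v x = 0 \<Longrightarrow> transpose Bm *v (proj_prod src tgt r T es *v x) = 0"
proof (induction es rule: rev_induct)
  case Nil thus ?case by (simp add: pp_nil del: transpose_matrix_vector)
next
  case (snoc e es)
  thus ?case by (simp add: pp_snoc matrix_vector_mul_assoc[symmetric] Pe_circ del: transpose_matrix_vector)
qed

lemma R_Ri: "Rm *v (Rim *v z) = z"
  using r_pos by (simp add: diag_mv vec_eq_iff less_imp_neq[symmetric])

lemma Pe_fix: "Pe e *v (Rim *v (Bm *v y)) = Rim *v (Bm *v y)"
proof -
  have "cv e \<bullet> (Rm *v (Rim *v (Bm *v y))) = 0"
    by (simp only: R_Ri) (metis inner_mv inner_commute cv_circ inner_zero_left)
  thus ?thesis by (simp add: Pe_mv)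
qed

lemma pp_fix: "proj_prod src tgt r T es *v (Rim *v (Bm *v y)) = Rim *v (Bm *v y)"
proof (induction es rule: rev_induct)
  case Nil thus ?case by (simp add: pp_nil)
next
  case (snoc e es)
  thus ?case by (simp add: pp_snoc matrix_vector_mul_assoc[symmetric] Pe_fix)
qed

end


lemma Jm_zero': "ones \<bullet> y = 0 \<Longrightarrow> Jm *v y = (0::real^'n)"
  by (simp add: Jm_mv inner_ones)

lemma ones_Jm_orth: "ones \<bullet> g = 0 \<Longrightarrow> (Jm *v y) \<bullet> g = (0::real)" for g :: "real^'n"
  by (simp add: Jm_mv inner_commute)

context
  fixes src tgt :: "'e::finite \<Rightarrow> 'v::finite" and r :: "'e \<Rightarrow> real" and S :: "'e set"
  assumes no_loops: "\<forall>e. src e \<noteq> tgt e"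
    and r_pos: "\<forall>e. r e > 0"
    and connS: "connected_by src tgt S"
begin

abbreviation "LL \<equiv> laplacian src tgt r S"

lemma Mi_ones: "matrix_inv (LL + Jm) *v ones = ones"
  by (metis Jm_ones MiS_Jm[OF no_loops r_pos connS] matrix_vector_mul_assoc)

lemma G1: "transpose (pinv LL) = pinv LL"
  by (simp add: pinv_LS[OF no_loops r_pos connS] transpose_diff MiS_sym[OF no_loops r_pos connS])

lemma G2: "pinv LL *v ones = 0"
  by (simp add: pinv_LS[OF no_loops r_pos connS] matrix_vector_mult_diff_rdistrib Mi_ones Jm_ones)

lemma G3: "ones \<bullet> (pinv LL *v y) = 0"
  by (metis G1 G2 inner_mv inner_zero_left inner_commute)

lemma LLp: "LL ** pinv LL = mat 1 - Jm"
  by (simp add: pinv_LS[OF no_loops r_pos connS] L_X[OF no_loops r_pos connS])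

lemma G4: "LL *v (pinv LL *v y) = y - Jm *v y"
  by (simp add: matrix_vector_mul_assoc LLp matrix_vector_mult_diff_rdistrib)

lemma G5: "pinv LL *v (LL *v y) = y - Jm *v y"
  by (simp add: matrix_vector_mul_assoc pinv_LS[OF no_loops r_pos connS] X_L[OF no_loops r_pos connS]
      matrix_vector_mult_diff_rdistrib)

lemma G8: "Jm *v (LL *v y) = 0"
  by (rule Jm_zero') (rule lap_ones'[OF no_loops])

lemma G9: "Jm *v (pinv LL *v y) = 0"
  by (rule Jm_zero') (rule G3)

lemma G7: "0 \<le> y \<bullet> (pinv LL *v y)"
proof -
  have "y = LL *v (pinv LL *v y) + Jm *v y" by (simp add: G4)
  hence "y \<bullet> (pinv LL *v y) = (LL *v (pinv LL *v y)) \<bullet> (pinv LL *v y) + (Jm *v y) \<bullet> (pinv LL *v y)"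
    by (metis inner_add_left)
  also have "(Jm *v y) \<bullet> (pinv LL *v y) = 0" by (rule ones_Jm_orth[OF G3])
  also have "(LL *v (pinv LL *v y)) \<bullet> (pinv LL *v y) = (pinv LL *v y) \<bullet> (LL *v (pinv LL *v y))"
    by (rule inner_commute)
  finally show ?thesis using lap_psd[OF no_loops r_pos connS] by simp
qed

lemma lap_sym_form: "x \<bullet> (LL *v y) = y \<bullet> (LL *v x)"
  by (simp add: lap_form[OF no_loops] mult_ac)

lemma pinv_sym_form: "x \<bullet> (pinv LL *v y) = y \<bullet> (pinv LL *v x)"
  by (metis G1 inner_mv inner_commute)

end



lemma sum_cs_nn:
  fixes a b w :: "'i \<Rightarrow> real"
  assumes "\<And>i. i \<in> A \<Longrightarrow> w i \<ge> 0"
  shows "(\<Sum>i\<in>A. w i * a i * b i)\<^sup>2 \<le> (\<Sum>i\<in>A. w i * (a i)\<^sup>2) * (\<Sum>i\<in>A. w i * (b i)\<^sup>2)"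
proof -
  have "(\<Sum>i\<in>A. w i * a i * b i) = (\<Sum>i\<in>A. (sqrt (w i) * a i) * (sqrt (w i) * b i))"
    by (rule sum.cong) (use assms in \<open>auto simp: mult_ac\<close>)
  also have "\<dots>\<^sup>2 \<le> (\<Sum>i\<in>A. (sqrt (w i) * a i)\<^sup>2) * (\<Sum>i\<in>A. (sqrt (w i) * b i)\<^sup>2)"
    by (rule sum_cs)
  also have "(\<Sum>i\<in>A. (sqrt (w i) * a i)\<^sup>2) = (\<Sum>i\<in>A. w i * (a i)\<^sup>2)"
    by (rule sum.cong) (use assms in \<open>auto simp: power_mult_distrib\<close>)
  also have "(\<Sum>i\<in>A. (sqrt (w i) * b i)\<^sup>2) = (\<Sum>i\<in>A. w i * (b i)\<^sup>2)"
    by (rule sum.cong) (use assms in \<open>auto simp: power_mult_distrib\<close>)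
  finally show ?thesis .
qed

lemma sum_option: "(\<Sum>k\<in>(UNIV::'a::finite option set). f k) = f None + (\<Sum>e\<in>UNIV. f (Some e))"
proof -
  have "(UNIV::'a option set) = insert None (range Some)" by (rule UNIV_option_conv)
  hence "(\<Sum>k\<in>(UNIV::'a option set). f k) = (\<Sum>k\<in>insert None (range Some). f k)" by simp
  also have "\<dots> = f None + (\<Sum>k\<in>range Some. f k)" by (subst sum.insert) auto
  also have "(\<Sum>k\<in>range Some. f k) = (\<Sum>e\<in>UNIV. f (Some e))" by (subst sum.reindex) auto
  finally show ?thesis .
qed

context gr begin

abbreviation "Lp \<equiv> pinv LUm"
abbreviation "LpT \<equiv> pinv LTm"
abbreviation "Mt \<equiv> LTm + Jm"
abbreviation "Mti \<equiv> matrix_inv (LTm + Jm)"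

lemmas GU4 = G4[OF no_loops r_pos connU] and GT4 = G4[OF no_loops r_pos connT]
lemmas GU5 = G5[OF no_loops r_pos connU] and GT5 = G5[OF no_loops r_pos connT]
lemmas GU8 = G8[OF no_loops r_pos connU] and GT8 = G8[OF no_loops r_pos connT]
lemmas GU7 = G7[OF no_loops r_pos connU] and GT7 = G7[OF no_loops r_pos connT]
lemmas GU3 = G3[OF no_loops r_pos connU] and GT3 = G3[OF no_loops r_pos connT]
lemmas GU9 = G9[OF no_loops r_pos connU] and GT9 = G9[OF no_loops r_pos connT]
lemmas GU1 = G1[OF no_loops r_pos connU] and GT1 = G1[OF no_loops r_pos connT]

definition Dm :: "real^'v^'e" where "Dm = Rim ** BTm - Rim ** Bm ** Lp ** LTm"

lemma Dm_mv: "Dm *v z = Rim *v (BTm *v z) - Rim *v (Bm *v (Lp *v (LTm *v z)))"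
  by (simp add: Dm_def matrix_vector_mult_diff_rdistrib matrix_vector_mul_assoc[symmetric])

lemma Dm_circ: "transpose Bm *v (Dm *v z) = 0"
proof -
  have "transpose Bm *v (Dm *v z) = LTm *v z - LUm *v (Lp *v (LTm *v z))"
    by (simp add: Dm_mv matrix_vector_mult_diff_distrib B_Ri_BT B_Ri_B del: transpose_matrix_vector)
  also have "\<dots> = 0" by (simp add: GU4 GT8)
  finally show ?thesis .
qed

lemma Nr_diff: "Nr (u - v) = Nr u - 2 * (u \<bullet> (Rm *v v)) + Nr v"
  by (simp add: Nr_def matrix_vector_mult_diff_distrib inner_diff_left inner_diff_right Rsym[of v u])

lemma Dm_Nr: "Nr (Dm *v z) \<le> z \<bullet> (LTm *v z)"
proof -
  define f0 where "f0 = Rim *v (BTm *v z)"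
  define g where "g = Lp *v (LTm *v z)"
  define fs where "fs = Rim *v (Bm *v g)"
  have a: "Nr f0 = z \<bullet> (LTm *v z)"
  proof -
    have "Nr f0 = f0 \<bullet> (BTm *v z)" by (simp add: Nr_def f0_def R_Ri)
    also have "\<dots> = z \<bullet> (LTm *v z)"
      by (simp add: f0_def inner_commute[of "Rim *v _"] inner_mv lap_mv[OF no_loops] del: transpose_matrix_vector)
    finally show ?thesis .
  qed
  have b: "f0 \<bullet> (Rm *v fs) = g \<bullet> (LTm *v z)"
  proof -
    have "f0 \<bullet> (Rm *v fs) = (Bm *v g) \<bullet> f0" by (simp add: fs_def R_Ri inner_commute)
    also have "\<dots> = g \<bullet> (LTm *v z)" by (simp add: inner_mv f0_def B_Ri_BT del: transpose_matrix_vector)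
    finally show ?thesis .
  qed
  have c: "Nr fs = g \<bullet> (LTm *v z)"
  proof -
    have "Nr fs = (Bm *v g) \<bullet> fs" by (simp add: Nr_def fs_def R_Ri inner_commute)
    also have "\<dots> = g \<bullet> (LUm *v g)" by (simp add: inner_mv fs_def B_Ri_B del: transpose_matrix_vector)
    also have "LUm *v g = LTm *v z" by (simp add: g_def GU4 GT8)
    finally show ?thesis .
  qed
  have d: "0 \<le> g \<bullet> (LTm *v z)" unfolding g_def by (subst inner_commute) (rule GU7)
  have "Nr (Dm *v z) = Nr (f0 - fs)" by (simp add: Dm_mv f0_def fs_def g_def)
  also have "\<dots> = z \<bullet> (LTm *v z) - g \<bullet> (LTm *v z)" by (simp add: Nr_diff a b c)
  finally show ?thesis using d by simp
qed

definition av :: "'e option \<Rightarrow> real^'v" where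
  "av k = (case k of None \<Rightarrow> ones | Some e \<Rightarrow> indic_vec (src e) - indic_vec (tgt e))"
definition wt :: "'e option \<Rightarrow> real" where
  "wt k = (case k of None \<Rightarrow> 1 / real CARD('v) | Some e \<Rightarrow> if e \<in> T then 1 / r e else 0)"
definition wk :: "'e option \<Rightarrow> real^'v" where "wk k = Mti *v av k"
definition Phi :: "real^'v^'e \<Rightarrow> real" where "Phi X = (\<Sum>k\<in>UNIV. wt k * Nr (X *v wk k))"

lemma wt_nonneg: "0 \<le> wt k"
  by (cases k) (auto simp: wt_def rpos less_imp_le)

lemma Phi_nonneg: "0 \<le> Phi X"
  unfolding Phi_def by (intro sum_nonneg mult_nonneg_nonneg wt_nonneg Nr_nonneg)

lemma Mt_expand: "Mt *v y = (\<Sum>k\<in>UNIV. (wt k * (av k \<bullet> y)) *\<^sub>R av k)"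
proof -
  have "(Mt *v y) $ v = (\<Sum>k\<in>UNIV. (wt k * (av k \<bullet> y)) *\<^sub>R av k) $ v" for v
  proof -
    have "(LTm *v y) $ v = (\<Sum>e\<in>T. (y $ src e - y $ tgt e) / r e * ((if v = src e then 1 else 0) - (if v = tgt e then 1 else 0)))"
      by (simp add: lap_mv[OF no_loops] incT_mv[OF no_loops] diag_mv inc_on_mv[OF no_loops] del: transpose_matrix_vector)
    also have "\<dots> = (\<Sum>e\<in>UNIV. if e \<in> T then (y $ src e - y $ tgt e) / r e * ((if v = src e then 1 else 0) - (if v = tgt e then 1 else 0)) else 0)"
      by (simp add: sum.If_cases)
    also have "\<dots> = (\<Sum>e\<in>UNIV. (wt (Some e) * (av (Some e) \<bullet> y)) * av (Some e) $ v)"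
    proof (rule sum.cong[OF refl])
      fix e
      have ay: "av (Some e) \<bullet> y = y $ src e - y $ tgt e"
        by (simp add: av_def inner_diff_left inner_indic')
      have av: "av (Some e) $ v = (if v = src e then 1 else 0) - (if v = tgt e then 1 else 0)"
        by (simp add: av_def indic_comp)
      show "(if e \<in> T then (y $ src e - y $ tgt e) / r e * ((if v = src e then 1 else 0) - (if v = tgt e then 1 else 0)) else 0)
          = (wt (Some e) * (av (Some e) \<bullet> y)) * av (Some e) $ v"
        unfolding ay av by (simp add: wt_def)
    qed
    finally have 1: "(LTm *v y) $ v = \<dots>" .
    have 2: "(Jm *v y) $ v = wt None * (av None \<bullet> y) * av None $ v"
      by (simp add: Jm_mv wt_def av_def inner_ones)
    have "(Mt *v y) $ v = (LTm *v y) $ v + (Jm *v y) $ v" by (simp add: matrix_vector_mult_add_rdistrib)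
    also have "\<dots> = (\<Sum>k\<in>UNIV. wt k * (av k \<bullet> y) * av k $ v)" by (simp only: 1 2 sum_option)
    also have "\<dots> = (\<Sum>k\<in>UNIV. (wt k * (av k \<bullet> y)) *\<^sub>R av k) $ v" by (simp add: sum_component)
    finally show ?thesis .
  qed
  thus ?thesis by (simp add: vec_eq_iff)
qed

lemmas MtI = MS_inv[OF no_loops r_pos connT]

lemma M_id: "z = (\<Sum>k\<in>UNIV. (wt k * (av k \<bullet> z)) *\<^sub>R wk k)"
proof -
  have "z = Mti *v (Mt *v z)" by (simp add: matrix_vector_mul_assoc MtI)
  also have "\<dots> = (\<Sum>k\<in>UNIV. (wt k * (av k \<bullet> z)) *\<^sub>R wk k)"
    by (simp add: Mt_expand mv_sum matrix_vector_mult_scaleR wk_def)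
  finally show ?thesis .
qed

lemma zMz: "z \<bullet> (Mt *v z) = (\<Sum>k\<in>UNIV. wt k * (av k \<bullet> z)\<^sup>2)"
  by (simp add: Mt_expand inner_sum_right inner_commute[of z] power2_eq_square mult_ac)

lemma R_cs: "(u \<bullet> (Rm *v v))\<^sup>2 \<le> Nr u * Nr v"
proof -
  have "(u \<bullet> (Rm *v v))\<^sup>2 = (\<Sum>i\<in>UNIV. r i * u $ i * v $ i)\<^sup>2" by (simp add: Rform mult_ac)
  also have "\<dots> \<le> (\<Sum>i\<in>UNIV. r i * (u $ i)\<^sup>2) * (\<Sum>i\<in>UNIV. r i * (v $ i)\<^sup>2)"
    by (rule sum_cs_nn) (simp add: rpos less_imp_le)
  finally show ?thesis by (simp add: Nr_sum)
qed

lemma quad_bound: "Nr (X *v z) \<le> Phi X * (z \<bullet> (Mt *v z))"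
proof -
  define p where "p k = av k \<bullet> z" for k
  define q where "q k = (X *v wk k) \<bullet> (Rm *v (X *v z))" for k
  have Xz: "X *v z = (\<Sum>k\<in>UNIV. (wt k * p k) *\<^sub>R (X *v wk k))"
    by (subst M_id) (simp add: mv_sum matrix_vector_mult_scaleR p_def)
  have "Nr (X *v z) = (\<Sum>k\<in>UNIV. (wt k * p k) *\<^sub>R (X *v wk k)) \<bullet> (Rm *v (X *v z))"
    unfolding Nr_def using Xz by (rule arg_cong[where f="\<lambda>t. t \<bullet> (Rm *v (X *v z))"])
  also have "\<dots> = (\<Sum>k\<in>UNIV. wt k * p k * q k)"
    by (simp add: inner_sum_left q_def)
  finally have N: "Nr (X *v z) = (\<Sum>k\<in>UNIV. wt k * p k * q k)" .
  have "(Nr (X *v z))\<^sup>2 \<le> (\<Sum>k\<in>UNIV. wt k * (p k)\<^sup>2) * (\<Sum>k\<in>UNIV. wt k * (q k)\<^sup>2)"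
    unfolding N by (rule sum_cs_nn) (rule wt_nonneg)
  also have "\<dots> \<le> (z \<bullet> (Mt *v z)) * (Phi X * Nr (X *v z))"
  proof (rule mult_mono)
    show "(\<Sum>k\<in>UNIV. wt k * (p k)\<^sup>2) \<le> z \<bullet> (Mt *v z)" by (simp add: zMz p_def)
    show "(\<Sum>k\<in>UNIV. wt k * (q k)\<^sup>2) \<le> Phi X * Nr (X *v z)"
      unfolding Phi_def sum_distrib_right
      by (rule sum_mono) (simp add: q_def mult.assoc mult_left_mono[OF R_cs wt_nonneg])
    show "0 \<le> z \<bullet> (Mt *v z)" by (simp add: zMz sum_nonneg wt_nonneg)
    show "0 \<le> (\<Sum>k\<in>UNIV. wt k * (q k)\<^sup>2)" by (simp add: sum_nonneg wt_nonneg)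
  qed
  finally have ineq: "Nr (X *v z) * Nr (X *v z) \<le> Nr (X *v z) * (Phi X * (z \<bullet> (Mt *v z)))"
    by (simp add: power2_eq_square mult_ac)
  show ?thesis
  proof (cases "Nr (X *v z) = 0")
    case True thus ?thesis using Phi_nonneg[of X] zMz[of z]
      by (simp add: sum_nonneg wt_nonneg)
  next
    case False
    hence "0 < Nr (X *v z)" using Nr_nonneg[of "X *v z"] by linarith
    thus ?thesis using ineq mult_le_cancel_left_pos by blast
  qed
qed

lemma Mti_sym: "transpose Mti = Mti" by (rule MiS_sym[OF no_loops r_pos connT])

lemma Mti_comp: "(Mti *v a) $ i = (Mti *v indic_vec i) \<bullet> a"
proof -
  have "(Mti *v a) $ i = (Mti *v a) \<bullet> indic_vec i" by (simp add: inner_indic)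
  also have "\<dots> = a \<bullet> (Mti *v indic_vec i)" by (simp add: inner_mv Mti_sym del: transpose_matrix_vector)
  finally show ?thesis by (simp add: inner_commute)
qed

lemma Phi_init: "Phi Dm \<le> real CARD('v)"
proof -
  have "Phi Dm \<le> (\<Sum>k\<in>UNIV. wt k * (wk k \<bullet> (Mt *v wk k)))"
    unfolding Phi_def
  proof (rule sum_mono)
    fix k
    have "Nr (Dm *v wk k) \<le> wk k \<bullet> (LTm *v wk k)" by (rule Dm_Nr)
    also have "\<dots> \<le> wk k \<bullet> (Mt *v wk k)"
      by (simp add: matrix_vector_mult_add_rdistrib inner_add_right inner_Jm)
    finally show "wt k * Nr (Dm *v wk k) \<le> wt k * (wk k \<bullet> (Mt *v wk k))"
      by (rule mult_left_mono[OF _ wt_nonneg])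
  qed
  also have "\<dots> = (\<Sum>k\<in>UNIV. wt k * (\<Sum>i\<in>UNIV. ((Mti *v indic_vec i) \<bullet> av k) * av k $ i))"
  proof (rule sum.cong[OF refl])
    fix k
    have e1: "wk k \<bullet> (Mt *v wk k) = (Mti *v av k) \<bullet> av k"
      by (simp add: wk_def matrix_vector_mul_assoc MtI)
    have e2: "(Mti *v av k) \<bullet> av k = (\<Sum>i\<in>UNIV. ((Mti *v indic_vec i) \<bullet> av k) * av k $ i)"
      unfolding inner_sum[of "Mti *v av k" "av k"] by (simp only: Mti_comp)
    show "wt k * (wk k \<bullet> (Mt *v wk k)) = wt k * (\<Sum>i\<in>UNIV. ((Mti *v indic_vec i) \<bullet> av k) * av k $ i)"
      by (simp only: e1 e2)
  qed
  also have "\<dots> = (\<Sum>k\<in>UNIV. \<Sum>i\<in>UNIV. wt k * (av k \<bullet> (Mti *v indic_vec i)) * av k $ i)"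
    by (simp add: sum_distrib_left inner_commute mult_ac)
  also have "\<dots> = (\<Sum>i\<in>UNIV. \<Sum>k\<in>UNIV. wt k * (av k \<bullet> (Mti *v indic_vec i)) * av k $ i)"
    by (rule sum.swap)
  also have "\<dots> = (\<Sum>i\<in>UNIV. (\<Sum>k\<in>UNIV. (wt k * (av k \<bullet> (Mti *v indic_vec i))) *\<^sub>R av k) $ i)"
    by (simp add: sum_component)
  also have "\<dots> = (\<Sum>i\<in>UNIV. (Mt *v (Mti *v indic_vec i)) $ i)"
    by (simp only: Mt_expand)
  also have "\<dots> = real CARD('v)"
    by (simp add: matrix_vector_mul_assoc MtI indic_comp)
  finally show ?thesis .
qed

end


lemma psd_intro: "transpose M = M \<Longrightarrow> (\<And>x. 0 \<le> x \<bullet> (M *v x)) \<Longrightarrow> psd M"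
  by (simp add: psd_def)

lemma quad_form: "y \<bullet> ((transpose X ** A ** X) *v y) = (X *v y) \<bullet> (A *v (X *v y))"
  for X :: "real^'n^'m"
  by (simp add: matrix_vector_mul_assoc[symmetric] inner_mv del: transpose_matrix_vector)

lemma quad_sym: "transpose A = A \<Longrightarrow> transpose (transpose X ** A ** X) = transpose X ** A ** (X::real^'n^'m)"
  by (simp add: matrix_transpose_mul matrix_mul_assoc)

context gr begin

lemma Lp_Jm: "Lp *v (Jm *v y) = 0"
  by (simp add: Jm_mv matrix_vector_mult_scaleR G2[OF no_loops r_pos connU])

lemma BT_Ri_B: "transpose BTm *v (Rim *v (Bm *v x)) = LTm *v x"
proof -
  have "(transpose BTm *v (Rim *v (Bm *v x))) $ v = (LTm *v x) $ v" for v
    by (simp add: lap_mv[OF no_loops] incT_mv[OF no_loops] diag_mv inc_mv[OF no_loops] inc_on_mv[OF no_loops]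
        del: transpose_matrix_vector)
  thus ?thesis by (simp add: vec_eq_iff del: transpose_matrix_vector)
qed

lemma LT_LpT_form: "(LpT *v y) \<bullet> (LTm *v (LpT *v y)) = y \<bullet> (LpT *v y)"
proof -
  have "(LpT *v y) \<bullet> (LTm *v (LpT *v y)) = (LpT *v y) \<bullet> (y - Jm *v y)" by (simp add: GT4)
  also have "\<dots> = (LpT *v y) \<bullet> y - (Jm *v y) \<bullet> (LpT *v y)" by (simp add: inner_diff_right inner_diff_left inner_commute)
  also have "(Jm *v y) \<bullet> (LpT *v y) = 0" by (rule ones_Jm_orth[OF GT3])
  finally show ?thesis by (simp add: inner_commute)
qed

lemma zMz_eq: "(LpT *v y) \<bullet> (Mt *v (LpT *v y)) = y \<bullet> (LpT *v y)"
  by (simp add: matrix_vector_mult_add_rdistrib inner_add_right GT9 LT_LpT_form)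

lemma lap_cs: "(h \<bullet> (LUm *v g))\<^sup>2 \<le> (h \<bullet> (LUm *v h)) * (g \<bullet> (LUm *v g))"
proof -
  have "(h \<bullet> (LUm *v g))\<^sup>2 = (\<Sum>e\<in>UNIV. (1 / r e) * (h $ src e - h $ tgt e) * (g $ src e - g $ tgt e))\<^sup>2"
    by (simp add: lap_form[OF no_loops])
  also have "\<dots> \<le> (\<Sum>e\<in>UNIV. (1 / r e) * (h $ src e - h $ tgt e)\<^sup>2) * (\<Sum>e\<in>UNIV. (1 / r e) * (g $ src e - g $ tgt e)\<^sup>2)"
    by (rule sum_cs_nn) (simp add: rpos less_imp_le)
  also have "\<dots> = (h \<bullet> (LUm *v h)) * (g \<bullet> (LUm *v g))"
    by (simp add: lap_form[OF no_loops] power2_eq_square)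
  finally show ?thesis .
qed

abbreviation "st \<equiv> stretch_tree src tgt r T"

lemma LpT_le: "y \<bullet> (LpT *v y) \<le> st * (y \<bullet> (Lp *v y))"
proof -
  define g where "g = LpT *v y"
  define h where "h = Lp *v y"
  have hL: "LUm *v h = y - Jm *v y" by (simp add: h_def GU4)
  have gLT: "LTm *v g = y - Jm *v y" by (simp add: g_def GT4)
  have yg: "y \<bullet> g = h \<bullet> (LUm *v g)"
  proof -
    have "h \<bullet> (LUm *v g) = g \<bullet> (LUm *v h)" by (rule lap_sym_form[OF no_loops r_pos connU])
    also have "\<dots> = g \<bullet> y - (Jm *v y) \<bullet> g" by (simp add: hL inner_diff_right inner_commute)
    also have "(Jm *v y) \<bullet> g = 0" unfolding g_def by (rule ones_Jm_orth[OF GT3])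
    finally show ?thesis by (simp add: inner_commute)
  qed
  have hh: "h \<bullet> (LUm *v h) = y \<bullet> h"
  proof -
    have "h \<bullet> (LUm *v h) = h \<bullet> y - (Jm *v y) \<bullet> h" by (simp add: hL inner_diff_right inner_commute)
    also have "(Jm *v y) \<bullet> h = 0" unfolding h_def by (rule ones_Jm_orth[OF GU3])
    finally show ?thesis by (simp add: inner_commute)
  qed
  have gg: "g \<bullet> (LTm *v g) = y \<bullet> g"
  proof -
    have "g \<bullet> (LTm *v g) = g \<bullet> y - (Jm *v y) \<bullet> g" by (simp add: gLT inner_diff_right inner_commute)
    also have "(Jm *v y) \<bullet> g = 0" unfolding g_def by (rule ones_Jm_orth[OF GT3])
    finally show ?thesis by (simp add: inner_commute)
  qed
  have yg0: "0 \<le> y \<bullet> g" unfolding g_def by (rule GT7)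
  have yh0: "0 \<le> y \<bullet> h" unfolding h_def by (rule GU7)
  have "(y \<bullet> g)\<^sup>2 \<le> (h \<bullet> (LUm *v h)) * (g \<bullet> (LUm *v g))" unfolding yg by (rule lap_cs)
  also have "\<dots> \<le> (y \<bullet> h) * (st * (y \<bullet> g))"
    unfolding hh using stretch_bound[of g] gg yh0 by (simp add: mult_left_mono)
  finally have ineq: "(y \<bullet> g) * (y \<bullet> g) \<le> (y \<bullet> g) * (st * (y \<bullet> h))" by (simp add: power2_eq_square mult_ac)
  have "y \<bullet> g \<le> st * (y \<bullet> h)"
  proof (cases "y \<bullet> g = 0")
    case True thus ?thesis using yh0 stretch_nonneg by simp
  next
    case False
    hence "0 < y \<bullet> g" using yg0 by linarith
    thus ?thesis using ineq mult_le_cancel_left_pos by blast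
  qed
  thus ?thesis by (simp add: g_def h_def)
qed

lemma conj2: assumes "0 < \<epsilon>" shows "\<epsilon> *\<^sub>R LpT \<preceq>\<^sub>L (\<epsilon> * st) *\<^sub>R Lp"
  unfolding loewner_le_def
proof (rule psd_intro)
  show "transpose ((\<epsilon> * st) *\<^sub>R Lp - \<epsilon> *\<^sub>R LpT) = (\<epsilon> * st) *\<^sub>R Lp - \<epsilon> *\<^sub>R LpT"
    by (simp add: transpose_diff transpose_scalar GU1 GT1)
  fix x
  have "\<epsilon> * (x \<bullet> (LpT *v x)) \<le> \<epsilon> * (st * (x \<bullet> (Lp *v x)))"
    using LpT_le[of x] assms by (simp add: mult_left_mono)
  thus "0 \<le> x \<bullet> (((\<epsilon> * st) *\<^sub>R Lp - \<epsilon> *\<^sub>R LpT) *v x)"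
    by (simp add: matrix_vector_mult_diff_rdistrib scaleR_matrix_vector_assoc[symmetric] inner_diff_right mult_ac)
qed

abbreviation "Qp es \<equiv> proj_prod src tgt r T es"
abbreviation "Fm es \<equiv> Qp es ** Rim ** BTm ** LpT"
abbreviation "Em es \<equiv> Fm es - Rim ** Bm ** Lp"

lemma Lp_LT_LpT: "Lp *v (LTm *v (LpT *v y)) = Lp *v y"
  by (simp add: GT4 matrix_vector_mult_diff_distrib Lp_Jm)

lemma Em_mv: "Em es *v y = Qp es *v (Dm *v (LpT *v y))"
proof -
  have "Em es *v y = Qp es *v (Rim *v (BTm *v (LpT *v y))) - Rim *v (Bm *v (Lp *v y))"
    by (simp add: matrix_vector_mult_diff_rdistrib matrix_vector_mul_assoc[symmetric])
  also have "Rim *v (Bm *v (Lp *v y)) = Qp es *v (Rim *v (Bm *v (Lp *v (LTm *v (LpT *v y)))))"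
    by (simp add: pp_fix Lp_LT_LpT)
  finally show ?thesis by (simp add: Dm_mv matrix_vector_mult_diff_distrib)
qed

lemma Em_Nr: assumes "Phi (Qp es ** Dm) \<le> \<epsilon>"
  shows "Nr (Em es *v y) \<le> \<epsilon> * (y \<bullet> (LpT *v y))"
proof -
  have "Nr (Em es *v y) = Nr ((Qp es ** Dm) *v (LpT *v y))"
    by (simp only: Em_mv matrix_vector_mul_assoc matrix_mul_assoc)
  also have "\<dots> \<le> Phi (Qp es ** Dm) * ((LpT *v y) \<bullet> (Mt *v (LpT *v y)))" by (rule quad_bound)
  also have "\<dots> \<le> \<epsilon> * ((LpT *v y) \<bullet> (Mt *v (LpT *v y)))"
    by (rule mult_right_mono[OF assms]) (simp add: zMz sum_nonneg wt_nonneg)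
  finally show ?thesis by (simp add: zMz_eq)
qed

lemma conj1: assumes "Phi (Qp es ** Dm) \<le> \<epsilon>"
  shows "transpose (Em es) ** Rm ** (Em es) \<preceq>\<^sub>L \<epsilon> *\<^sub>R LpT"
  unfolding loewner_le_def
proof (rule psd_intro)
  show "transpose (\<epsilon> *\<^sub>R LpT - transpose (Em es) ** Rm ** Em es) = \<epsilon> *\<^sub>R LpT - transpose (Em es) ** Rm ** Em es"
  proof -
    have qs: "transpose (transpose (Em es) ** Rm ** Em es) = transpose (Em es) ** Rm ** Em es"
      by (rule quad_sym) simp
    show ?thesis
      unfolding transpose_diff[of "\<epsilon> *\<^sub>R LpT" "transpose (Em es) ** Rm ** Em es"] qs transpose_scalar GT1 ..
  qed
  fix y
  have "y \<bullet> ((\<epsilon> *\<^sub>R LpT - transpose (Em es) ** Rm ** Em es) *v y) = \<epsilon> * (y \<bullet> (LpT *v y)) - Nr (Em es *v y)"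
    by (simp add: matrix_vector_mult_diff_rdistrib scaleR_matrix_vector_assoc[symmetric] inner_diff_right
        quad_form Nr_def)
  thus "0 \<le> y \<bullet> ((\<epsilon> *\<^sub>R LpT - transpose (Em es) ** Rm ** Em es) *v y)"
    using Em_Nr[OF assms, of y] by simp
qed

abbreviation "Vm es \<equiv> LpT ** transpose BTm ** Fm es"

lemma Vm_mv: "(Vm es - Lp) *v y = LpT *v (transpose BTm *v (Em es *v y))"
proof -
  have F: "Fm es *v y = Em es *v y + Rim *v (Bm *v (Lp *v y))"
    by (simp add: matrix_vector_mult_diff_rdistrib matrix_vector_mul_assoc[symmetric])
  have X: "LpT *v (transpose BTm *v (Rim *v (Bm *v (Lp *v y)))) = Lp *v y"
    by (simp only: BT_Ri_B GT5) (simp add: GU9)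
  have V: "Vm es *v y = LpT *v (transpose BTm *v (Fm es *v y))"
    by (simp only: matrix_vector_mul_assoc matrix_mul_assoc)
  have "(Vm es - Lp) *v y = LpT *v (transpose BTm *v (Em es *v y + Rim *v (Bm *v (Lp *v y)))) - Lp *v y"
    unfolding matrix_vector_mult_diff_rdistrib[of "Vm es" Lp y] V F ..
  also have "\<dots> = LpT *v (transpose BTm *v (Em es *v y)) + LpT *v (transpose BTm *v (Rim *v (Bm *v (Lp *v y)))) - Lp *v y"
    by (simp only: matrix_vector_right_distrib)
  finally show ?thesis by (simp only: X) simp
qed

lemma BT_bound: "(transpose BTm *v f) \<bullet> (LpT *v (transpose BTm *v f)) \<le> Nr f"
proof -
  define w where "w = transpose BTm *v f"
  define v where "v = LpT *v w"
  define \<alpha> where "\<alpha> = w \<bullet> v"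
  have w1: "Jm *v w = 0" unfolding w_def by (rule Jm_zero'[OF ones_incT[OF no_loops]])
  have vLv: "v \<bullet> (LTm *v v) = \<alpha>"
    by (simp add: v_def GT4 w1 \<alpha>_def inner_commute)
  have a0: "0 \<le> \<alpha>" unfolding \<alpha>_def v_def by (rule GT7)
  have "(BTm *v v) \<bullet> f = v \<bullet> (transpose BTm *v f)" by (rule inner_mv)
  hence "\<alpha> = (BTm *v v) \<bullet> f" by (simp add: \<alpha>_def w_def inner_commute)
  also have "\<dots> = (\<Sum>e\<in>UNIV. f $ e * (BTm *v v) $ e)" by (simp add: inner_sum mult_ac)
  finally have "\<alpha>\<^sup>2 = (\<Sum>e\<in>UNIV. f $ e * (BTm *v v) $ e)\<^sup>2" by simp
  also have "\<dots> \<le> (\<Sum>e\<in>UNIV. r e * (f $ e)\<^sup>2) * (\<Sum>e\<in>UNIV. ((BTm *v v) $ e)\<^sup>2 / r e)"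
    by (rule sum_cs_w) (simp add: rpos)
  also have "(\<Sum>e\<in>UNIV. ((BTm *v v) $ e)\<^sup>2 / r e) = v \<bullet> (LTm *v v)"
  proof -
    have "(\<Sum>e\<in>UNIV. ((BTm *v v) $ e)\<^sup>2 / r e) =
      (\<Sum>e\<in>UNIV. if e \<in> T then (v $ src e - v $ tgt e) * (v $ src e - v $ tgt e) / r e else 0)"
      by (rule sum.cong) (simp_all add: inc_on_mv[OF no_loops] power2_eq_square)
    also have "\<dots> = v \<bullet> (LTm *v v)" by (simp add: sum.If_cases lap_form[OF no_loops])
    finally show ?thesis .
  qed
  finally have "\<alpha> * \<alpha> \<le> \<alpha> * Nr f" by (simp add: vLv Nr_sum power2_eq_square mult_ac)
  hence "\<alpha> \<le> Nr f"
    using a0 by (cases "\<alpha> = 0") (simp add: Nr_nonneg, simp add: mult_le_cancel_left_pos)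
  thus ?thesis by (simp add: \<alpha>_def v_def w_def)
qed

lemma conj3: assumes "Phi (Qp es ** Dm) \<le> \<epsilon>" "0 < \<epsilon>"
  shows "transpose (Vm es - Lp) ** LUm ** (Vm es - Lp) \<preceq>\<^sub>L (\<epsilon> * st\<^sup>2) *\<^sub>R Lp"
  unfolding loewner_le_def
proof (rule psd_intro)
  show "transpose ((\<epsilon> * st\<^sup>2) *\<^sub>R Lp - transpose (Vm es - Lp) ** LUm ** (Vm es - Lp)) =
      (\<epsilon> * st\<^sup>2) *\<^sub>R Lp - transpose (Vm es - Lp) ** LUm ** (Vm es - Lp)"
  proof -
    have qs: "transpose (transpose (Vm es - Lp) ** LUm ** (Vm es - Lp)) = transpose (Vm es - Lp) ** LUm ** (Vm es - Lp)"
      by (rule quad_sym) (rule lap_sym[OF no_loops])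
    show ?thesis
      unfolding transpose_diff[of "(\<epsilon> * st\<^sup>2) *\<^sub>R Lp" "transpose (Vm es - Lp) ** LUm ** (Vm es - Lp)"] qs
        transpose_scalar GU1 ..
  qed
  fix y
  define f where "f = Em es *v y"
  define w where "w = transpose BTm *v f"
  define u where "u = LpT *v w"
  have w1: "Jm *v w = 0" unfolding w_def by (rule Jm_zero'[OF ones_incT[OF no_loops]])
  have "y \<bullet> ((transpose (Vm es - Lp) ** LUm ** (Vm es - Lp)) *v y) = u \<bullet> (LUm *v u)"
    by (simp add: quad_form Vm_mv u_def w_def f_def del: transpose_matrix_vector)
  also have "\<dots> \<le> st * (u \<bullet> (LTm *v u))" by (rule stretch_bound)
  also have "u \<bullet> (LTm *v u) = w \<bullet> (LpT *v w)"
    by (simp add: u_def GT4 w1 inner_commute)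
  also have "st * (w \<bullet> (LpT *v w)) \<le> st * Nr f"
    by (rule mult_left_mono[OF _ stretch_nonneg]) (unfold w_def, rule BT_bound)
  also have "\<dots> \<le> st * (\<epsilon> * (y \<bullet> (LpT *v y)))"
    by (rule mult_left_mono[OF _ stretch_nonneg]) (simp add: f_def Em_Nr[OF assms(1)])
  also have "\<dots> \<le> st * (\<epsilon> * (st * (y \<bullet> (Lp *v y))))"
    by (intro mult_left_mono LpT_le stretch_nonneg) (use assms in auto)
  finally have "y \<bullet> ((transpose (Vm es - Lp) ** LUm ** (Vm es - Lp)) *v y) \<le> (\<epsilon> * st\<^sup>2) * (y \<bullet> (Lp *v y))"
    by (simp add: power2_eq_square mult_ac)
  thus "0 \<le> y \<bullet> (((\<epsilon> * st\<^sup>2) *\<^sub>R Lp - transpose (Vm es - Lp) ** LUm ** (Vm es - Lp)) *v y)"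
    by (simp add: matrix_vector_mult_diff_rdistrib scaleR_matrix_vector_assoc[symmetric] inner_diff_right
        del: transpose_matrix_vector)
qed

end


lemma nat_ceiling_ge: "x \<le> real (nat \<lceil>x\<rceil>)"
  by (cases "x \<le> 0") (auto simp: le_of_int_ceiling)

context gr begin

definition LSet :: "nat \<Rightarrow> 'e list set" where
  "LSet K = {es. set es \<subseteq> UNIV - T \<and> length es = K}"

lemma LSet_fin: "finite (LSet K)"
  unfolding LSet_def by (rule finite_lists_length_eq) simp

lemma LSet_0: "LSet 0 = {[]}" by (auto simp: LSet_def)

lemma LSet_Suc: "LSet (Suc K) = (\<lambda>(es, e). es @ [e]) ` (LSet K \<times> (UNIV - T))"
proof
  show "(\<lambda>(es, e). es @ [e]) ` (LSet K \<times> (UNIV - T)) \<subseteq> LSet (Suc K)"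
    by (auto simp: LSet_def)
  show "LSet (Suc K) \<subseteq> (\<lambda>(es, e). es @ [e]) ` (LSet K \<times> (UNIV - T))"
  proof
    fix xs assume xs: "xs \<in> LSet (Suc K)"
    hence ne: "xs \<noteq> []" by (auto simp: LSet_def)
    have "xs = butlast xs @ [last xs]" using ne by simp
    moreover have "butlast xs \<in> LSet K" using xs by (auto simp: LSet_def dest: in_set_butlastD)
    moreover have "last xs \<in> UNIV - T" using xs ne last_in_set by (auto simp: LSet_def)
    ultimately show "xs \<in> (\<lambda>(es, e). es @ [e]) ` (LSet K \<times> (UNIV - T))" by force
  qed
qed

lemma sum_LSet_Suc: "(\<Sum>es\<in>LSet (Suc K). f es) = (\<Sum>es\<in>LSet K. \<Sum>e\<in>UNIV - T. f (es @ [e]))"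
proof -
  have inj: "inj_on (\<lambda>(es, e). es @ [e]) (LSet K \<times> (UNIV - T))"
    by (auto simp: inj_on_def)
  have "(\<Sum>es\<in>LSet (Suc K). f es) = (\<Sum>p\<in>LSet K \<times> (UNIV - T). f ((\<lambda>(es, e). es @ [e]) p))"
    unfolding LSet_Suc by (subst sum.reindex[OF inj]) (simp add: comp_def)
  also have "\<dots> = (\<Sum>es\<in>LSet K. \<Sum>e\<in>UNIV - T. f (es @ [e]))"
    unfolding sum.cartesian_product by (rule sum.cong) auto
  finally show ?thesis .
qed

abbreviation "W es \<equiv> prod_list (map pr es)"

definition Psi :: "'e list \<Rightarrow> real" where "Psi es = Phi (Qp es ** Dm)"

context
  assumes nontriv: "UNIV - T \<noteq> {}"
begin

lemma W_nonneg: "set es \<subseteq> UNIV - T \<Longrightarrow> 0 \<le> W es"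
  by (induction es) (auto intro!: mult_nonneg_nonneg pr_nonneg[OF nontriv])

lemma W_sum: "(\<Sum>es\<in>LSet K. W es) = 1"
proof (induction K)
  case 0 thus ?case by (simp add: LSet_0)
next
  case (Suc K)
  have "(\<Sum>es\<in>LSet (Suc K). W es) = (\<Sum>es\<in>LSet K. \<Sum>e\<in>UNIV - T. W es * pr e)"
    by (simp add: sum_LSet_Suc)
  also have "\<dots> = (\<Sum>es\<in>LSet K. W es)"
    by (simp add: sum_distrib_left[symmetric] pr_sum[OF nontriv])
  finally show ?case using Suc by simp
qed

lemma Psi_step: "(\<Sum>e\<in>UNIV - T. pr e * Psi (es @ [e])) \<le> (1 - 1 / tau') * Psi es"
proof -
  define x where "x k = Qp es *v (Dm *v wk k)" for k
  have xc: "transpose Bm *v x k = 0" for k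
    unfolding x_def by (rule pp_circ[OF Dm_circ])
  have P1: "Psi (es @ [e]) = (\<Sum>k\<in>UNIV. wt k * Nr (Pe e *v x k))" for e
    by (simp add: Psi_def Phi_def pp_snoc x_def matrix_vector_mul_assoc matrix_mul_assoc)
  have P0: "Psi es = (\<Sum>k\<in>UNIV. wt k * Nr (x k))"
    by (simp add: Psi_def Phi_def x_def matrix_vector_mul_assoc)
  have "(\<Sum>e\<in>UNIV - T. pr e * Psi (es @ [e])) = (\<Sum>e\<in>UNIV - T. \<Sum>k\<in>UNIV. wt k * (pr e * Nr (Pe e *v x k)))"
    by (simp add: P1 sum_distrib_left mult_ac)
  also have "\<dots> = (\<Sum>k\<in>UNIV. wt k * (\<Sum>e\<in>UNIV - T. pr e * Nr (Pe e *v x k)))"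
    by (subst sum.swap) (simp add: sum_distrib_left)
  also have "\<dots> \<le> (\<Sum>k\<in>UNIV. wt k * ((1 - 1 / tau') * Nr (x k)))"
    by (rule sum_mono, rule mult_left_mono[OF contract[OF nontriv xc] wt_nonneg])
  also have "\<dots> = (1 - 1 / tau') * Psi es"
    by (simp add: P0 sum_distrib_left mult_ac)
  finally show ?thesis .
qed

lemma Psi_nil: "Psi [] \<le> real CARD('v)"
  by (simp add: Psi_def pp_nil Phi_init)

lemma Psi_nonneg: "0 \<le> Psi es" by (simp add: Psi_def Phi_nonneg)

lemma E_bound: "(\<Sum>es\<in>LSet K. W es * Psi es) \<le> (1 - 1 / tau') ^ K * real CARD('v)"
proof (induction K)
  case 0 thus ?case by (simp add: LSet_0 Psi_nil)
next
  case (Suc K)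
  have c0: "0 \<le> 1 - 1 / tau'" using tau_ge1[OF nontriv] by simp
  have "(\<Sum>es\<in>LSet (Suc K). W es * Psi es) = (\<Sum>es\<in>LSet K. W es * (\<Sum>e\<in>UNIV - T. pr e * Psi (es @ [e])))"
    by (simp add: sum_LSet_Suc sum_distrib_left mult_ac)
  also have "\<dots> \<le> (\<Sum>es\<in>LSet K. W es * ((1 - 1 / tau') * Psi es))"
  proof (rule sum_mono)
    fix es assume "es \<in> LSet K"
    hence "0 \<le> W es" by (intro W_nonneg) (simp add: LSet_def)
    thus "W es * (\<Sum>e\<in>UNIV - T. pr e * Psi (es @ [e])) \<le> W es * ((1 - 1 / tau') * Psi es)"
      by (rule mult_left_mono[OF Psi_step])
  qed
  also have "\<dots> = (1 - 1 / tau') * (\<Sum>es\<in>LSet K. W es * Psi es)"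
    by (simp add: sum_distrib_left mult_ac)
  also have "\<dots> \<le> (1 - 1 / tau') * ((1 - 1 / tau') ^ K * real CARD('v))"
    by (rule mult_left_mono[OF Suc c0])
  finally show ?case by simp
qed

lemma markov:
  assumes eps: "0 < \<epsilon>" and Eb: "(\<Sum>es\<in>LSet K. W es * Psi es) \<le> \<epsilon> * p"
    and imp: "\<And>es. es \<in> LSet K \<Longrightarrow> Psi es \<le> \<epsilon> \<Longrightarrow> P es"
  shows "1 - p \<le> iid_prob pr (UNIV - T) K P"
proof -
  have "iid_prob pr (UNIV - T) K P = (\<Sum>es\<in>LSet K. if P es then W es else 0)"
    by (simp add: iid_prob_def LSet_def)
  also have "\<dots> \<ge> (\<Sum>es\<in>LSet K. W es - W es * Psi es / \<epsilon>)"
  proof (rule sum_mono)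
    fix es assume es: "es \<in> LSet K"
    have W0: "0 \<le> W es" using es by (intro W_nonneg) (simp add: LSet_def)
    show "W es - W es * Psi es / \<epsilon> \<le> (if P es then W es else 0)"
    proof (cases "P es")
      case True thus ?thesis using W0 Psi_nonneg[of es] eps by simp
    next
      case False
      hence "\<epsilon> < Psi es" using imp[OF es] by fastforce
      hence "W es * \<epsilon> \<le> W es * Psi es" using W0 by (simp add: mult_left_mono)
      hence "W es \<le> W es * Psi es / \<epsilon>" using eps by (simp add: field_simps)
      thus ?thesis using False by simp
    qed
  qed
  also have "(\<Sum>es\<in>LSet K. W es - W es * Psi es / \<epsilon>) = 1 - (\<Sum>es\<in>LSet K. W es * Psi es) / \<epsilon>"
    by (simp add: sum_subtractf W_sum sum_divide_distrib)
  also have "\<dots> \<ge> 1 - p"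
  proof -
    have "(\<Sum>es\<in>LSet K. W es * Psi es) / \<epsilon> \<le> p" using Eb eps by (simp add: field_simps)
    thus ?thesis by simp
  qed
  finally show ?thesis .
qed

lemma K_bound:
  assumes eps: "0 < \<epsilon>" and p: "0 < p"
  shows "(1 - 1 / tau') ^ nat \<lceil>tau' * ln (real CARD('v) / (\<epsilon> * p))\<rceil> * real CARD('v) \<le> \<epsilon> * p"
proof -
  define K where "K = nat \<lceil>tau' * ln (real CARD('v) / (\<epsilon> * p))\<rceil>"
  define n where "n = real CARD('v)"
  have t1: "1 \<le> tau'" by (rule tau_ge1[OF nontriv])
  have n0: "0 < n" by (simp add: n_def)
  have ep: "0 < \<epsilon> * p" using eps p by simp
  have "(1 - 1 / tau') ^ K \<le> exp (- 1 / tau') ^ K"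
    by (rule power_mono) (use exp_ge_add_one_self[of "- 1 / tau'"] t1 in simp_all)
  also have "\<dots> = exp (- real K / tau')" by (simp add: exp_of_nat_mult[symmetric])
  also have "\<dots> \<le> exp (- ln (n / (\<epsilon> * p)))"
  proof -
    have "tau' * ln (n / (\<epsilon> * p)) \<le> real K" unfolding K_def n_def by (rule nat_ceiling_ge)
    hence "ln (n / (\<epsilon> * p)) \<le> real K / tau'" using t1 by (simp add: field_simps)
    thus ?thesis by simp
  qed
  also have "\<dots> = \<epsilon> * p / n" using n0 ep by (simp add: exp_minus exp_ln)
  finally have "(1 - 1 / tau') ^ K \<le> \<epsilon> * p / n" .
  hence "(1 - 1 / tau') ^ K * n \<le> \<epsilon> * p" using n0 by (simp add: field_simps)
  thus ?thesis by (simp add: K_def n_def)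
qed

end
end

theorem theorem10p3:
  fixes src tgt :: "'e::finite \<Rightarrow> 'v::finite"
    and r :: "'e \<Rightarrow> real" and T :: "'e set"
    and \<epsilon> p :: real
  assumes no_loops: "\<forall>e. src e \<noteq> tgt e"
    and conn: "connected_by src tgt (UNIV :: 'e set)"
    and r_pos: "\<forall>e. r e > 0"
    and tree: "spanning_tree src tgt T"
    and nontriv: "UNIV - T \<noteq> {}"
    and eps: "\<epsilon> > 0"
    and p: "0 < p" "p < 1"
  defines "B \<equiv> incidence src tgt"
    and "BT \<equiv> incidence_on src tgt T"
    and "R \<equiv> diag_mat r"
    and "Rinv \<equiv> diag_mat (\<lambda>e. 1 / r e)"
    and "L \<equiv> laplacian src tgt r UNIV"
    and "LTr \<equiv> laplacian src tgt r T"
    and "K \<equiv> nat \<lceil>tau src tgt r T * ln (real CARD('v) / (\<epsilon> * p))\<rceil>"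
    and "st \<equiv> stretch_tree src tgt r T"
  shows "iid_prob (edge_prob src tgt r T) (UNIV - T) K
           (\<lambda>es. let F = proj_prod src tgt r T es ** Rinv ** BT ** pinv LTr;
                      V = pinv LTr ** transpose BT ** F
                  in transpose (F - Rinv ** B ** pinv L) ** R ** (F - Rinv ** B ** pinv L)
                        \<preceq>\<^sub>L \<epsilon> *\<^sub>R pinv LTr
                   \<and> \<epsilon> *\<^sub>R pinv LTr \<preceq>\<^sub>L (\<epsilon> * st) *\<^sub>R pinv L
                   \<and> transpose (V - pinv L) ** L ** (V - pinv L) \<preceq>\<^sub>L (\<epsilon> * st\<^sup>2) *\<^sub>R pinv L)
         \<ge> 1 - p"
proof -
  interpret g: gr src tgt r T
    by unfold_locales (use no_loops r_pos tree in auto)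
  show ?thesis
    unfolding B_def BT_def R_def Rinv_def L_def LTr_def K_def st_def Let_def
  proof (rule g.markov[OF nontriv eps])
    show "(\<Sum>es\<in>g.LSet (nat \<lceil>tau src tgt r T * ln (real CARD('v) / (\<epsilon> * p))\<rceil>). g.W es * g.Psi es) \<le> \<epsilon> * p"
      using g.E_bound[OF nontriv] g.K_bound[OF nontriv eps p(1)] by (rule order_trans)
    fix es assume "g.Psi es \<le> \<epsilon>"
    hence ph: "g.Phi (proj_prod src tgt r T es ** g.Dm) \<le> \<epsilon>" by (simp add: g.Psi_def)
    show "transpose (proj_prod src tgt r T es ** diag_mat (\<lambda>e. 1 / r e) ** incidence_on src tgt T ** pinv (laplacian src tgt r T) -
              diag_mat (\<lambda>e. 1 / r e) ** incidence src tgt ** pinv (laplacian src tgt r UNIV)) ** diag_mat r **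
          (proj_prod src tgt r T es ** diag_mat (\<lambda>e. 1 / r e) ** incidence_on src tgt T ** pinv (laplacian src tgt r T) -
           diag_mat (\<lambda>e. 1 / r e) ** incidence src tgt ** pinv (laplacian src tgt r UNIV))
          \<preceq>\<^sub>L \<epsilon> *\<^sub>R pinv (laplacian src tgt r T) \<and>
          \<epsilon> *\<^sub>R pinv (laplacian src tgt r T) \<preceq>\<^sub>L (\<epsilon> * stretch_tree src tgt r T) *\<^sub>R pinv (laplacian src tgt r UNIV) \<and>
          transpose (pinv (laplacian src tgt r T) ** transpose (incidence_on src tgt T) **
            (proj_prod src tgt r T es ** diag_mat (\<lambda>e. 1 / r e) ** incidence_on src tgt T ** pinv (laplacian src tgt r T)) -
           pinv (laplacian src tgt r UNIV)) ** laplacian src tgt r UNIV **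
          (pinv (laplacian src tgt r T) ** transpose (incidence_on src tgt T) **
            (proj_prod src tgt r T es ** diag_mat (\<lambda>e. 1 / r e) ** incidence_on src tgt T ** pinv (laplacian src tgt r T)) -
           pinv (laplacian src tgt r UNIV))
          \<preceq>\<^sub>L (\<epsilon> * (stretch_tree src tgt r T)\<^sup>2) *\<^sub>R pinv (laplacian src tgt r UNIV)"
      using g.conj1[OF ph] g.conj2[OF eps] g.conj3[OF ph eps] by blast
  qed
qed


end
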